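(* Let $n=2m+1$ be odd, and let $\mathbf{V}=\{V_{rj}\}$, $V_j$ and $V$ be as described in the context. Let $M$ be uniform on $\{m,m+1\}$, independent of $\mathbf{V}$. For $i\in\{1,\dots,n\}$, given $\mathbf{V}$ and $M$, let $F^i\in\{0,1\}$ satisfy $P(F^i=1\mid\mathbf{V},M)=\frac{1}{m+1}\mathbf{1}(\mathbf{V}^{M,i}\text{ is feasible})$, and let $J^i$ be uniform on $\{j:V_{Mj}\ne V_{Mi}\}$. Define $$\mathbf{V}^i=\begin{cases}\mathbf{V}&V_i=1\\ \mathbf{V}^{M,i}&V_i=0,\ F^i=1\\ \mathbf{V}^{M,i,J^i}&V_i=0,\ F^i=0.\end{cases}$$ Then $\mathcal{L}(\mathbf{V}^i)=\mathcal{L}(\mathbf{V}\mid V_i=1)$. Further, let $V^i=\sum_{j=1}^nV^i_j$ with $V^i_j=(\sum_{r=1}^nV^i_{rj})\bmod 2$, and let $I$ be uniform on $\{1,\dots,n\}$, independent of all other variables. Then $V^s=V^I$ has the $V$-size bias distribution and, writing $F=F^I$, $J=J^I$, $$V^s-V=\mathbf{1}_{\{V_I=0,F=1\}}+2\,\mathbf{1}_{\{V_I=0,\,V_J=0,\,F=0\}}\quad\text{and}\quad V\le V^s\le V+2.$$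
   Context: Standard lightbulb process: $n$ bulbs, all initially off, $n$ stages; at stage $r$ a uniformly random subset of exactly $r$ bulbs is toggled, independently across stages; switch variables $X_{rj}\in\{0,1\}$ ($1$ iff bulb $j$ toggled at stage $r$). Construction of $\mathbf{V}$ for $n=2m+1$: given $\mathbf{X}$, let $B_m$ be uniform on $\{j:X_{mj}=0\}$ and $B_{m+1}$ uniform on $\{j:X_{m+1,j}=1\}$; let $C_m,C_{m+1}$ be independent symmetric Bernoulli variables independent of $\mathbf{X},B_m,B_{m+1}$; set $V_{rj}=X_{rj}$ except $V_{m,B_m}=C_m$ and $V_{m+1,B_{m+1}}=C_{m+1}$; $V_j=(\sum_rV_{rj})\bmod2$, $V=\sum_jV_j$. A $\{0,1\}$-array $\mathbf{e}=\{e_{rj}\}_{r,j=1}^n$ is feasible if $\sum_je_{rj}=r$ for $r\notin\{m,m+1\}$ and $\sum_je_{rj}\in\{m,m+1\}$ for $r\in\{m,m+1\}$. For $r\in\{m,m+1\}$ and $i,j$: $\mathbf{e}^{r,i}$ equals $\mathbf{e}$ except that entry $(r,i)$ is replaced by $1-e_{ri}$; $\mathbf{e}^{r,i,j}$ equals $\mathbf{e}$ with the entries in positions $(r,i)$ and $(r,j)$ interchanged. $\mathbf{V}^{M,i}$, $\mathbf{V}^{M,i,j}$ are defined likewise from $\mathbf{V}$. $V^s$ has the $V$-size bias distribution if $E[Vg(V)]=E[V]E[g(V^s)]$ for all bounded continuous $g$. *)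

theory Defs
  imports "HOL-Probability.Probability"
begin

text \<open>Arrays of switch variables: e r j for stage r and bulb j, r j in {1..n}, values in {0,1}.\<close>
type_synonym arr = "nat \<Rightarrow> nat \<Rightarrow> nat"

definition X_pmf :: "nat \<Rightarrow> arr pmf" where
  "X_pmf n = map_pmf (\<lambda>S r j. if j \<in> S r then 1 else 0)
     (Pi_pmf {1..n} {} (\<lambda>r. pmf_of_set {S. S \<subseteq> {1..n} \<and> card S = r}))"

definition upd_entry :: "arr \<Rightarrow> nat \<Rightarrow> nat \<Rightarrow> nat \<Rightarrow> arr" where
  "upd_entry e r j v = e(r := (e r)(j := v))"

definition V_pmf :: "nat \<Rightarrow> arr pmf" where
  "V_pmf m = do {
     X \<leftarrow> X_pmf (2*m+1);
     Bm \<leftarrow> pmf_of_set {j \<in> {1..2*m+1}. X m j = 0};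
     Bm1 \<leftarrow> pmf_of_set {j \<in> {1..2*m+1}. X (m+1) j = 1};
     Cm \<leftarrow> bernoulli_pmf (1/2);
     Cm1 \<leftarrow> bernoulli_pmf (1/2);
     return_pmf (upd_entry (upd_entry X m Bm (if Cm then 1 else 0)) (m+1) Bm1 (if Cm1 then 1 else 0))
   }"

definition bulb :: "nat \<Rightarrow> arr \<Rightarrow> nat \<Rightarrow> nat" where
  "bulb m e j = (\<Sum>r=1..2*m+1. e r j) mod 2"

definition Vtot :: "nat \<Rightarrow> arr \<Rightarrow> nat" where
  "Vtot m e = (\<Sum>j=1..2*m+1. bulb m e j)"

definition feasible :: "nat \<Rightarrow> arr \<Rightarrow> bool" where
  "feasible m e \<longleftrightarrow>
     (\<forall>r\<in>{1..2*m+1}. \<forall>j\<in>{1..2*m+1}. e r j \<in> {0,1}) \<and>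
     (\<forall>r\<in>{1..2*m+1} - {m, m+1}. (\<Sum>j=1..2*m+1. e r j) = r) \<and>
     (\<forall>r\<in>{m, m+1}. (\<Sum>j=1..2*m+1. e r j) \<in> {m, m+1})"

text \<open>e^{r,i}: flip entry (r,i); e^{r,i,j}: interchange entries (r,i) and (r,j).\<close>
definition flip :: "arr \<Rightarrow> nat \<Rightarrow> nat \<Rightarrow> arr" where
  "flip e r i = upd_entry e r i (1 - e r i)"

definition swap :: "arr \<Rightarrow> nat \<Rightarrow> nat \<Rightarrow> nat \<Rightarrow> arr" where
  "swap e r i j = e(r := (e r)(i := e r j, j := e r i))"

definition joint :: "nat \<Rightarrow> nat \<Rightarrow> (arr \<times> nat \<times> bool \<times> nat) pmf" where
  "joint m i = do {
     V \<leftarrow> V_pmf m;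
     M \<leftarrow> pmf_of_set {m, m+1};
     F \<leftarrow> bernoulli_pmf (if feasible m (flip V M i) then 1 / real (m+1) else 0);
     J \<leftarrow> pmf_of_set {j \<in> {1..2*m+1}. V M j \<noteq> V M i};
     return_pmf (V, M, F, J)
   }"

definition Vi :: "nat \<Rightarrow> arr \<Rightarrow> nat \<Rightarrow> bool \<Rightarrow> nat \<Rightarrow> nat \<Rightarrow> arr" where
  "Vi m V M F J i =
     (if bulb m V i = 1 then V else if F then flip V M i else swap V M i J)"

definition full :: "nat \<Rightarrow> (nat \<times> arr \<times> nat \<times> bool \<times> nat) pmf" where
  "full m = do {
     I \<leftarrow> pmf_of_set {1..2*m+1};
     (V, M, F, J) \<leftarrow> joint m I;
     return_pmf (I, V, M, F, J)
   }"

end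

theory Submission
  imports Defs
begin


definition ind :: "nat set \<Rightarrow> nat \<Rightarrow> nat" where "ind S = (\<lambda>j. if j \<in> S then 1 else 0)"
definition Sub :: "nat \<Rightarrow> nat \<Rightarrow> nat set set" where "Sub n r = {S. S \<subseteq> {1..n} \<and> card S = r}"

lemma inj_ind: "inj ind"
proof (rule injI)
  fix S T assume "ind S = ind T"
  hence "\<And>x. (x \<in> S) = (x \<in> T)" unfolding ind_def fun_eq_iff by (metis one_neq_zero)
  thus "S = T" by blast
qed

lemma finite_Sub[simp]: "finite (Sub n r)"
  unfolding Sub_def by (rule finite_subset[of _ "Pow {1..n}"]) auto

lemma card_Sub: "card (Sub n r) = n choose r"
  unfolding Sub_def using n_subsets[of "{1..n}" r] by simp

lemma Sub_ne: "r \<le> n \<Longrightarrow> Sub n r \<noteq> {}"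
proof -
  assume "r \<le> n" hence "{1..r} \<in> Sub n r" by (auto simp: Sub_def)
  thus ?thesis by blast
qed

lemma X_pmf_alt: "X_pmf n = Pi_pmf {1..n} (\<lambda>_. 0) (\<lambda>r. pmf_of_set (ind ` Sub n r))"
proof -
  have e3: "(\<lambda>h. ind \<circ> h) = (\<lambda>S r j. if j \<in> S r then 1 else 0::nat)"
    by (auto simp: ind_def fun_eq_iff)
  have "X_pmf n = map_pmf (\<lambda>h. ind \<circ> h) (Pi_pmf {1..n} {} (\<lambda>r. pmf_of_set (Sub n r)))"
    unfolding X_pmf_def Sub_def e3 ..
  also have "\<dots> = Pi_pmf {1..n} (\<lambda>_. 0::nat) (\<lambda>r. map_pmf ind (pmf_of_set (Sub n r)))"
    by (rule Pi_pmf_map[symmetric]) (auto simp: ind_def)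
  also have "\<dots> = Pi_pmf {1..n} (\<lambda>_. 0) (\<lambda>r. pmf_of_set (ind ` Sub n r))"
    by (intro Pi_pmf_cong refl map_pmf_of_set_inj) (auto intro: inj_on_subset[OF inj_ind] simp: Sub_ne)
  finally show ?thesis .
qed


lemma pmf_bind_half: "pmf (bind_pmf (bernoulli_pmf (1/2)) f) x = (pmf (f True) x + pmf (f False) x) / 2"
proof -
  have "pmf (bind_pmf (bernoulli_pmf (1/2)) f) x = (\<Sum>a\<in>UNIV. pmf (bernoulli_pmf (1/2)) a *\<^sub>R pmf (f a) x)"
    unfolding pmf_bind by (rule integral_measure_pmf) auto
  also have "\<dots> = (pmf (f True) x + pmf (f False) x) / 2"
    by (simp add: UNIV_bool)
  finally show ?thesis .
qed

lemma sum_sum_card: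
  assumes "finite A" "\<And>a. a \<in> A \<Longrightarrow> finite (B a)"
  shows "(\<Sum>a\<in>A. \<Sum>b\<in>B a. of_bool (P a b) :: real) = real (card {(a,b). a \<in> A \<and> b \<in> B a \<and> P a b})"
proof -
  have "(\<Sum>a\<in>A. \<Sum>b\<in>B a. of_bool (P a b) :: real) = (\<Sum>z\<in>Sigma A B. of_bool (P (fst z) (snd z)))"
    using assms by (subst sum.Sigma) (auto simp: case_prod_beta)
  also have "\<dots> = real (card (Sigma A B \<inter> {z. P (fst z) (snd z)}))"
    using assms by (subst sum_of_bool_eq) auto
  also have "Sigma A B \<inter> {z. P (fst z) (snd z)} = {(a,b). a \<in> A \<and> b \<in> B a \<and> P a b}" by auto
  finally show ?thesis .
qed

lemma count_ins:
  assumes "T \<in> Sub n (Suc k)"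
  shows "card {(S,b). S \<in> Sub n k \<and> b \<in> {1..n} - S \<and> insert b S = T} = Suc k"
proof -
  have fT: "finite T" using assms by (auto simp: Sub_def intro: finite_subset)
  have "{(S,b). S \<in> Sub n k \<and> b \<in> {1..n} - S \<and> insert b S = T} = (\<lambda>b. (T - {b}, b)) ` T"
  proof (intro equalityI subsetI)
    fix z assume "z \<in> {(S,b). S \<in> Sub n k \<and> b \<in> {1..n} - S \<and> insert b S = T}"
    then obtain S b where z: "z = (S,b)" "S \<in> Sub n k" "b \<in> {1..n} - S" "insert b S = T" by auto
    hence "S = T - {b}" by auto
    thus "z \<in> (\<lambda>b. (T - {b}, b)) ` T" using z by auto
  next
    fix z assume "z \<in> (\<lambda>b. (T - {b}, b)) ` T"
    then obtain b where z: "z = (T - {b}, b)" "b \<in> T" by auto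
    have "T - {b} \<in> Sub n k" using assms z fT by (auto simp: Sub_def)
    thus "z \<in> {(S,b). S \<in> Sub n k \<and> b \<in> {1..n} - S \<and> insert b S = T}"
      using z assms by (auto simp: Sub_def)
  qed
  moreover have "card ((\<lambda>b. (T - {b}, b)) ` T) = card T"
    by (rule card_image) (auto simp: inj_on_def)
  ultimately show ?thesis using assms by (simp add: Sub_def)
qed

lemma count_ins0:
  assumes "T \<notin> Sub n (Suc k)"
  shows "{(S,b). S \<in> Sub n k \<and> b \<in> {1..n} - S \<and> insert b S = T} = {}"
proof -
  { fix S b assume h: "S \<in> Sub n k" "b \<in> {1..n} - S" "insert b S = T"
    hence "finite S" unfolding Sub_def using finite_subset[of S "{1..n}"] by auto
    hence "T \<in> Sub n (Suc k)" using h by (auto simp: Sub_def)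
    with assms have False by simp }
  thus ?thesis by auto
qed

lemma count_del:
  assumes "T \<in> Sub n k"
  shows "card {(S,b). S \<in> Sub n (Suc k) \<and> b \<in> S \<and> S - {b} = T} = n - k"
proof -
  have fT: "finite T" using assms by (auto simp: Sub_def intro: finite_subset)
  have "{(S,b). S \<in> Sub n (Suc k) \<and> b \<in> S \<and> S - {b} = T} = (\<lambda>b. (insert b T, b)) ` ({1..n} - T)"
  proof (intro equalityI subsetI)
    fix z assume "z \<in> {(S,b). S \<in> Sub n (Suc k) \<and> b \<in> S \<and> S - {b} = T}"
    then obtain S b where z: "z = (S,b)" "S \<in> Sub n (Suc k)" "b \<in> S" "S - {b} = T" by auto
    hence "S = insert b T" by auto
    thus "z \<in> (\<lambda>b. (insert b T, b)) ` ({1..n} - T)" using z by (auto simp: Sub_def)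
  next
    fix z assume "z \<in> (\<lambda>b. (insert b T, b)) ` ({1..n} - T)"
    then obtain b where z: "z = (insert b T, b)" "b \<in> {1..n} - T" by auto
    have "insert b T \<in> Sub n (Suc k)" using assms z fT by (auto simp: Sub_def)
    thus "z \<in> {(S,b). S \<in> Sub n (Suc k) \<and> b \<in> S \<and> S - {b} = T}"
      using z by auto
  qed
  moreover have "card ((\<lambda>b. (insert b T, b)) ` ({1..n} - T)) = card ({1..n} - T)"
    by (rule card_image) (auto simp: inj_on_def)
  moreover have "card ({1..n} - T) = n - k" using assms fT by (auto simp: Sub_def card_Diff_subset)
  ultimately show ?thesis by simp
qed

lemma count_del0:
  assumes "T \<notin> Sub n k"
  shows "{(S,b). S \<in> Sub n (Suc k) \<and> b \<in> S \<and> S - {b} = T} = {}"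
proof -
  { fix S b assume "S \<in> Sub n (Suc k)" "b \<in> S" "S - {b} = T"
    hence "T \<in> Sub n k" by (auto simp: Sub_def intro: finite_subset[of _ "{1..n}"])
    with assms have False by simp }
  thus ?thesis by auto
qed

lemma card_Sub_mid: "card (Sub (2*m+1) (m+1)) = card (Sub (2*m+1) m)"
  unfolding card_Sub using binomial_symmetric[of m "2*m+1"] by simp

lemma card_Sub_union: "card (Sub (2*m+1) m \<union> Sub (2*m+1) (m+1)) = 2 * card (Sub (2*m+1) m)"
proof -
  have "Sub (2*m+1) m \<inter> Sub (2*m+1) (m+1) = {}" by (auto simp: Sub_def)
  hence "card (Sub (2*m+1) m \<union> Sub (2*m+1) (m+1)) = card (Sub (2*m+1) m) + card (Sub (2*m+1) (m+1))"
    by (intro card_Un_disjoint) auto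
  thus ?thesis using card_Sub_mid[of m] by linarith
qed


lemma card_Sub_pos: "m \<le> n \<Longrightarrow> card (Sub n m) > 0"
  using Sub_ne[of m n] by (simp add: card_gt_0_iff)

lemma pmf_coin_ret: "pmf (bind_pmf (bernoulli_pmf (1/2)) (\<lambda>c. return_pmf (if c then x else y))) T
   = (of_bool (x = T) + of_bool (y = T)) / 2"
  by (simp add: pmf_bind_half pmf_return indicator_def)

lemma rowA:
  fixes m :: nat
  defines "n \<equiv> 2*m+1"
  shows "bind_pmf (pmf_of_set (Sub n m)) (\<lambda>S. bind_pmf (pmf_of_set ({1..n} - S))
            (\<lambda>b. bind_pmf (bernoulli_pmf (1/2)) (\<lambda>c. return_pmf (if c then insert b S else S))))
         = pmf_of_set (Sub n m \<union> Sub n (m+1))"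
proof (rule pmf_eqI)
  fix T
  define C where "C = card (Sub n m)"
  have Cpos: "C > 0" unfolding C_def n_def by (rule card_Sub_pos) simp
  have cardD: "card ({1..n} - S) = m+1" if "S \<in> Sub n m" for S
  proof -
    have "finite S" "S \<subseteq> {1..n}" "card S = m" using that finite_subset[of S "{1..n}"] by (auto simp: Sub_def)
    thus ?thesis by (simp add: card_Diff_subset n_def)
  qed
  have inner: "pmf (bind_pmf (pmf_of_set ({1..n} - S))
            (\<lambda>b. bind_pmf (bernoulli_pmf (1/2)) (\<lambda>c. return_pmf (if c then insert b S else S)))) T
         = (\<Sum>b\<in>{1..n}-S. of_bool (insert b S = T) + of_bool (S = T)) / (2*(m+1))"
    if S: "S \<in> Sub n m" for S
  proof -
    have ne: "{1..n} - S \<noteq> {}"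
    proof
      assume e: "{1..n} - S = {}"
      have "card ({1..n} - S) = 0" unfolding e by simp
      with cardD[OF S] show False by simp
    qed
    have "pmf (bind_pmf (pmf_of_set ({1..n} - S))
            (\<lambda>b. bind_pmf (bernoulli_pmf (1/2)) (\<lambda>c. return_pmf (if c then insert b S else S)))) T
       = (\<Sum>b\<in>{1..n}-S. (of_bool (insert b S = T) + of_bool (S = T)) / 2) / real (m+1)"
      using ne cardD[OF S] by (simp add: pmf_bind_pmf_of_set pmf_coin_ret)
    also have "\<dots> = (\<Sum>b\<in>{1..n}-S. of_bool (insert b S = T) + of_bool (S = T)) / (2*(m+1))"
      by (simp add: sum_divide_distrib[symmetric])
    finally show ?thesis .
  qed
  have "pmf (bind_pmf (pmf_of_set (Sub n m)) (\<lambda>S. bind_pmf (pmf_of_set ({1..n} - S))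
            (\<lambda>b. bind_pmf (bernoulli_pmf (1/2)) (\<lambda>c. return_pmf (if c then insert b S else S))))) T
      = (\<Sum>S\<in>Sub n m. (\<Sum>b\<in>{1..n}-S. of_bool (insert b S = T) + of_bool (S = T)) / (2*(m+1))) / C"
    using Cpos unfolding C_def
    apply (subst pmf_bind_pmf_of_set)
    apply (auto)[2]
    apply (rule arg_cong2[where f="(/)"], rule sum.cong[OF refl], erule inner, rule refl)
    done
  also have "\<dots> = ((\<Sum>S\<in>Sub n m. \<Sum>b\<in>{1..n}-S. of_bool (insert b S = T))
                  + (\<Sum>S\<in>Sub n m. \<Sum>b\<in>{1..n}-S. of_bool (S = T))) / (2*(m+1)*C)"
    by (simp add: sum_divide_distrib[symmetric] sum.distrib algebra_simps del: sum_of_bool_eq)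
  also have "(\<Sum>S\<in>Sub n m. \<Sum>b\<in>{1..n}-S. of_bool (S = T) :: real) = real (m+1) * of_bool (T \<in> Sub n m)"
  proof -
    have "(\<Sum>S\<in>Sub n m. \<Sum>b\<in>{1..n}-S. of_bool (S = T) :: real) = (\<Sum>S\<in>Sub n m. real (m+1) * of_bool (S = T))"
      by (intro sum.cong refl) (auto dest: cardD)
    also have "\<dots> = real (m+1) * of_bool (T \<in> Sub n m)"
      by (simp add: sum_distrib_left[symmetric])
    finally show ?thesis .
  qed
  also have "(\<Sum>S\<in>Sub n m. \<Sum>b\<in>{1..n}-S. of_bool (insert b S = T) :: real) = real (m+1) * of_bool (T \<in> Sub n (m+1))"
  proof (cases "T \<in> Sub n (Suc m)")
    case True
    show ?thesis using count_ins[OF True] True by (subst sum_sum_card) auto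
  next
    case False
    show ?thesis using False
      apply (subst sum_sum_card, simp, simp)
      apply (subst count_ins0[OF False])
      apply simp
      done
  qed
  also have "(real (m+1) * of_bool (T \<in> Sub n (m+1)) + real (m+1) * of_bool (T \<in> Sub n m)) / (2*(m+1)*C)
       = pmf (pmf_of_set (Sub n m \<union> Sub n (m+1))) T"
  proof -
    have "card (Sub n m \<union> Sub n (m+1)) = 2*C" unfolding C_def n_def by (rule card_Sub_union)
    moreover have "Sub n m \<inter> Sub n (m+1) = {}" by (auto simp: Sub_def)
    moreover have "Sub n m \<union> Sub n (m+1) \<noteq> {}" using Cpos unfolding C_def by auto
    moreover have "(1 + real m) / (2 * real C + 2 * real m * real C) = 1 / (2 * real C)"
    proof -
      have "2 * real C + 2 * real m * real C = (1 + real m) * (2 * real C)" by algebra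
      thus ?thesis by simp
    qed
    ultimately show ?thesis using Cpos by (auto simp: indicator_def)
  qed
  finally show "pmf (bind_pmf (pmf_of_set (Sub n m)) (\<lambda>S. bind_pmf (pmf_of_set ({1..n} - S))
            (\<lambda>b. bind_pmf (bernoulli_pmf (1/2)) (\<lambda>c. return_pmf (if c then insert b S else S))))) T
       = pmf (pmf_of_set (Sub n m \<union> Sub n (m+1))) T" .
qed

lemma rowB:
  fixes m :: nat
  defines "n \<equiv> 2*m+1"
  shows "bind_pmf (pmf_of_set (Sub n (m+1))) (\<lambda>S. bind_pmf (pmf_of_set S)
            (\<lambda>b. bind_pmf (bernoulli_pmf (1/2)) (\<lambda>c. return_pmf (if c then S else S - {b}))))
         = pmf_of_set (Sub n m \<union> Sub n (m+1))"
proof (rule pmf_eqI)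
  fix T
  define C where "C = card (Sub n m)"
  have Cpos: "C > 0" unfolding C_def n_def by (rule card_Sub_pos) simp
  have CC: "card (Sub n (m+1)) = C" unfolding C_def n_def by (rule card_Sub_mid)
  have cardD: "card S = m+1" "finite S" if "S \<in> Sub n (m+1)" for S
    using that finite_subset[of S "{1..n}"] by (auto simp: Sub_def)
  have inner: "pmf (bind_pmf (pmf_of_set S)
            (\<lambda>b. bind_pmf (bernoulli_pmf (1/2)) (\<lambda>c. return_pmf (if c then S else S - {b})))) T
         = (\<Sum>b\<in>S. of_bool (S - {b} = T) + of_bool (S = T)) / (2*(m+1))"
    if S: "S \<in> Sub n (m+1)" for S
  proof -
    have ne: "S \<noteq> {}"
    proof
      assume e: "S = {}"
      have "card S = 0" unfolding e by simp
      with cardD[OF S] show False by simp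
    qed
    have "pmf (bind_pmf (pmf_of_set S)
            (\<lambda>b. bind_pmf (bernoulli_pmf (1/2)) (\<lambda>c. return_pmf (if c then S else S - {b})))) T
       = (\<Sum>b\<in>S. (of_bool (S = T) + of_bool (S - {b} = T)) / 2) / real (m+1)"
      using ne cardD[OF S] by (simp add: pmf_bind_pmf_of_set pmf_coin_ret)
    also have "\<dots> = (\<Sum>b\<in>S. of_bool (S - {b} = T) + of_bool (S = T)) / (2*(m+1))"
      by (simp add: sum_divide_distrib[symmetric] add.commute)
    finally show ?thesis .
  qed
  have "pmf (bind_pmf (pmf_of_set (Sub n (m+1))) (\<lambda>S. bind_pmf (pmf_of_set S)
            (\<lambda>b. bind_pmf (bernoulli_pmf (1/2)) (\<lambda>c. return_pmf (if c then S else S - {b}))))) T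
      = (\<Sum>S\<in>Sub n (m+1). (\<Sum>b\<in>S. of_bool (S - {b} = T) + of_bool (S = T)) / (2*(m+1))) / C"
    using Cpos CC
    apply (subst pmf_bind_pmf_of_set)
    apply (auto)[2]
    apply (subst CC)
    apply (rule arg_cong2[where f="(/)"], rule sum.cong[OF refl], erule inner, rule refl)
    done
  also have "\<dots> = ((\<Sum>S\<in>Sub n (m+1). \<Sum>b\<in>S. of_bool (S - {b} = T))
                  + (\<Sum>S\<in>Sub n (m+1). \<Sum>b\<in>S. of_bool (S = T))) / (2*(m+1)*C)"
    by (simp add: sum_divide_distrib[symmetric] sum.distrib algebra_simps del: sum_of_bool_eq)
  also have "(\<Sum>S\<in>Sub n (m+1). \<Sum>b\<in>S. of_bool (S = T) :: real) = real (m+1) * of_bool (T \<in> Sub n (m+1))"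
  proof -
    have "(\<Sum>S\<in>Sub n (m+1). \<Sum>b\<in>S. of_bool (S = T) :: real) = (\<Sum>S\<in>Sub n (m+1). real (m+1) * of_bool (S = T))"
      by (intro sum.cong refl) (auto simp: Sub_def)
    also have "\<dots> = real (m+1) * of_bool (T \<in> Sub n (m+1))"
      by (simp add: sum_distrib_left[symmetric])
    finally show ?thesis .
  qed
  also have "(\<Sum>S\<in>Sub n (m+1). \<Sum>b\<in>S. of_bool (S - {b} = T) :: real) = real (m+1) * of_bool (T \<in> Sub n m)"
  proof (cases "T \<in> Sub n m")
    case True
    have "n - m = m + 1" unfolding n_def by simp
    thus ?thesis using True
      apply (subst sum_sum_card, simp, simp add: cardD)
      apply (subst count_del[OF True, unfolded Suc_eq_plus1])
      apply simp
      done
  next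
    case False
    show ?thesis using False
      apply (subst sum_sum_card, simp, simp add: cardD)
      apply (subst count_del0[OF False, unfolded Suc_eq_plus1])
      apply simp
      done
  qed
  also have "(real (m+1) * of_bool (T \<in> Sub n m) + real (m+1) * of_bool (T \<in> Sub n (m+1))) / (2*(m+1)*C)
       = pmf (pmf_of_set (Sub n m \<union> Sub n (m+1))) T"
  proof -
    have "card (Sub n m \<union> Sub n (m+1)) = 2*C" unfolding C_def n_def by (rule card_Sub_union)
    moreover have "Sub n m \<inter> Sub n (m+1) = {}" by (auto simp: Sub_def)
    moreover have "Sub n m \<union> Sub n (m+1) \<noteq> {}" using Cpos unfolding C_def by auto
    moreover have "(1 + real m) / (2 * real C + 2 * real m * real C) = 1 / (2 * real C)"
    proof -
      have "2 * real C + 2 * real m * real C = (1 + real m) * (2 * real C)" by algebra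
      thus ?thesis by simp
    qed
    ultimately show ?thesis using Cpos by (auto simp: indicator_def)
  qed
  finally show "pmf (bind_pmf (pmf_of_set (Sub n (m+1))) (\<lambda>S. bind_pmf (pmf_of_set S)
            (\<lambda>b. bind_pmf (bernoulli_pmf (1/2)) (\<lambda>c. return_pmf (if c then S else S - {b}))))) T
       = pmf (pmf_of_set (Sub n m \<union> Sub n (m+1))) T" .
qed


definition Qm :: "nat \<Rightarrow> (nat \<Rightarrow> nat) \<Rightarrow> (nat \<Rightarrow> nat) pmf" where
  "Qm m rw = do {b \<leftarrow> pmf_of_set {j \<in> {1..2*m+1}. rw j = 0}; c \<leftarrow> bernoulli_pmf (1/2);
                  return_pmf (rw(b := if c then 1 else 0))}"
definition Qm1 :: "nat \<Rightarrow> (nat \<Rightarrow> nat) \<Rightarrow> (nat \<Rightarrow> nat) pmf" where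
  "Qm1 m rw = do {b \<leftarrow> pmf_of_set {j \<in> {1..2*m+1}. rw j = 1}; c \<leftarrow> bernoulli_pmf (1/2);
                  return_pmf (rw(b := if c then 1 else 0))}"
definition Q :: "nat \<Rightarrow> nat \<Rightarrow> (nat \<Rightarrow> nat) \<Rightarrow> (nat \<Rightarrow> nat) pmf" where
  "Q m r rw = (if r = m then Qm m rw else if r = m+1 then Qm1 m rw else return_pmf rw)"

lemma Sub_fin: "S \<in> Sub n k \<Longrightarrow> finite S \<and> S \<subseteq> {1..n} \<and> card S = k"
  unfolding Sub_def using finite_subset[of S "{1..n}"] by auto

lemma Qm_ind:
  assumes S: "S \<in> Sub (2*m+1) m"
  shows "Qm m (ind S) = map_pmf ind (bind_pmf (pmf_of_set ({1..2*m+1} - S))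
            (\<lambda>b. bind_pmf (bernoulli_pmf (1/2)) (\<lambda>c. return_pmf (if c then insert b S else S))))"
proof -
  note SS = Sub_fin[OF S]
  have e1: "{j \<in> {1..2*m+1}. ind S j = 0} = {1..2*m+1} - S" by (auto simp: ind_def)
  have card: "card ({1..2*m+1} - S) = m+1" using SS by (simp add: card_Diff_subset)
  have ne: "{1..2*m+1} - S \<noteq> {}"
  proof
    assume e: "{1..2*m+1} - S = {}"
    have "card ({1..2*m+1} - S) = 0" unfolding e by simp
    with card show False by simp
  qed
  show ?thesis
    unfolding Qm_def e1 map_bind_pmf map_return_pmf
  proof (intro bind_pmf_cong refl)
    fix b c assume b: "b \<in> set_pmf (pmf_of_set ({1..2*m+1} - S))"
    hence "b \<notin> S" using ne by simp
    thus "return_pmf ((ind S)(b := if c then 1 else 0)) = return_pmf (ind (if c then insert b S else S))"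
      by (auto simp: ind_def fun_eq_iff)
  qed
qed

lemma Qm1_ind:
  assumes S: "S \<in> Sub (2*m+1) (m+1)"
  shows "Qm1 m (ind S) = map_pmf ind (bind_pmf (pmf_of_set S)
            (\<lambda>b. bind_pmf (bernoulli_pmf (1/2)) (\<lambda>c. return_pmf (if c then S else S - {b}))))"
proof -
  note SS = Sub_fin[OF S]
  have e1: "{j \<in> {1..2*m+1}. ind S j = 1} = S" using SS by (auto simp: ind_def)
  have ne: "S \<noteq> {}"
  proof
    assume e: "S = {}"
    have "card S = 0" unfolding e by simp
    with SS show False by simp
  qed
  show ?thesis
    unfolding Qm1_def e1 map_bind_pmf map_return_pmf
  proof (intro bind_pmf_cong refl)
    fix b c assume b: "b \<in> set_pmf (pmf_of_set S)"
    hence "b \<in> S" using ne SS by simp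
    thus "return_pmf ((ind S)(b := if c then 1 else 0)) = return_pmf (ind (if c then S else S - {b}))"
      by (auto simp: ind_def fun_eq_iff)
  qed
qed

definition Bset :: "nat \<Rightarrow> nat \<Rightarrow> (nat \<Rightarrow> nat) set" where
  "Bset m r = (if r = m \<or> r = m+1 then ind ` (Sub (2*m+1) m \<union> Sub (2*m+1) (m+1)) else ind ` Sub (2*m+1) r)"

lemma factor:
  assumes r: "r \<in> {1..2*m+1}"
  shows "bind_pmf (pmf_of_set (ind ` Sub (2*m+1) r)) (Q m r) = pmf_of_set (Bset m r)"
proof -
  have inj: "inj_on ind X" for X by (rule inj_on_subset[OF inj_ind]) simp
  have ne: "Sub (2*m+1) r \<noteq> {}" using r by (intro Sub_ne) simp
  have ne2: "Sub (2*m+1) m \<union> Sub (2*m+1) (m+1) \<noteq> {}" using Sub_ne[of m "2*m+1"] by auto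
  have "bind_pmf (pmf_of_set (ind ` Sub (2*m+1) r)) (Q m r)
      = bind_pmf (pmf_of_set (Sub (2*m+1) r)) (\<lambda>S. Q m r (ind S))"
    using ne by (simp add: map_pmf_of_set_inj[OF inj, symmetric] bind_map_pmf)
  also have "\<dots> = pmf_of_set (Bset m r)"
  proof (cases "r = m")
    case True
    have "bind_pmf (pmf_of_set (Sub (2*m+1) r)) (\<lambda>S. Q m r (ind S))
       = bind_pmf (pmf_of_set (Sub (2*m+1) m)) (\<lambda>S. map_pmf ind (bind_pmf (pmf_of_set ({1..2*m+1} - S))
            (\<lambda>b. bind_pmf (bernoulli_pmf (1/2)) (\<lambda>c. return_pmf (if c then insert b S else S)))))"
      using True ne by (intro bind_pmf_cong refl) (simp_all add: Q_def Qm_ind)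
    also have "\<dots> = map_pmf ind (pmf_of_set (Sub (2*m+1) m \<union> Sub (2*m+1) (m+1)))"
      using rowA[of m] by (simp add: map_bind_pmf[symmetric])
    also have "\<dots> = pmf_of_set (Bset m r)"
      using True ne2 by (simp add: Bset_def map_pmf_of_set_inj[OF inj])
    finally show ?thesis .
  next
    case F1: False
    show ?thesis
    proof (cases "r = m+1")
      case True
      have "bind_pmf (pmf_of_set (Sub (2*m+1) r)) (\<lambda>S. Q m r (ind S))
         = bind_pmf (pmf_of_set (Sub (2*m+1) (m+1))) (\<lambda>S. map_pmf ind (bind_pmf (pmf_of_set S)
              (\<lambda>b. bind_pmf (bernoulli_pmf (1/2)) (\<lambda>c. return_pmf (if c then S else S - {b})))))"
        using True ne by (intro bind_pmf_cong refl) (simp_all add: Q_def Qm1_ind)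
      also have "\<dots> = map_pmf ind (pmf_of_set (Sub (2*m+1) m \<union> Sub (2*m+1) (m+1)))"
        using rowB[of m] by (simp add: map_bind_pmf[symmetric])
      also have "\<dots> = pmf_of_set (Bset m r)"
        using True ne2 by (simp add: Bset_def map_pmf_of_set_inj[OF inj])
      finally show ?thesis .
    next
      case False
      thus ?thesis using F1 ne
        by (simp add: Q_def Bset_def bind_return_pmf' map_pmf_of_set_inj[OF inj, symmetric]
                      map_pmf_def[symmetric])
    qed
  qed
  finally show ?thesis .
qed

lemma inner_eq:
  assumes m: "m \<ge> 1" and X0: "\<And>r. r \<notin> {1..2*m+1} \<Longrightarrow> X r = (\<lambda>_. 0)"
  shows "Pi_pmf {1..2*m+1} (\<lambda>_. 0) (\<lambda>r. Q m r (X r)) =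
    do {
     Bm \<leftarrow> pmf_of_set {j \<in> {1..2*m+1}. X m j = 0};
     Bm1 \<leftarrow> pmf_of_set {j \<in> {1..2*m+1}. X (m+1) j = 1};
     Cm \<leftarrow> bernoulli_pmf (1/2);
     Cm1 \<leftarrow> bernoulli_pmf (1/2);
     return_pmf (upd_entry (upd_entry X m Bm (if Cm then 1 else 0)) (m+1) Bm1 (if Cm1 then 1 else 0))
   }"
proof -
  define R where "R = {1..2*m+1} - {m, m+1}"
  have finR: "finite R" unfolding R_def by simp
  have dec: "{1..2*m+1} = insert m (insert (m+1) R)" using m unfolding R_def by auto
  have nm: "m \<notin> insert (m+1) R" "m+1 \<notin> R" unfolding R_def by auto
  define G where "G = (\<lambda>r. if r \<in> R then X r else (\<lambda>_. 0::nat))"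
  have PR: "Pi_pmf R (\<lambda>_. 0) (\<lambda>r. Q m r (X r)) = return_pmf G"
  proof -
    have "Pi_pmf R (\<lambda>_. 0) (\<lambda>r. Q m r (X r)) = Pi_pmf R (\<lambda>_. 0) (\<lambda>r. return_pmf (X r))"
      by (intro Pi_pmf_cong refl) (auto simp: Q_def R_def)
    also have "\<dots> = return_pmf G" using finR by (simp add: G_def)
    finally show ?thesis .
  qed
  have GX: "(G(m+1 := y'))(m := y) = X(m := y, m+1 := y')" for y y'
    using X0 unfolding G_def R_def by (auto simp: fun_eq_iff)
  have "Pi_pmf {1..2*m+1} (\<lambda>_. 0) (\<lambda>r. Q m r (X r))
     = do {y \<leftarrow> Q m m (X m); f \<leftarrow> Pi_pmf (insert (m+1) R) (\<lambda>_. 0) (\<lambda>r. Q m r (X r)); return_pmf (f(m := y))}"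
    unfolding dec using finR nm by (subst Pi_pmf_insert') auto
  also have "\<dots> = do {y \<leftarrow> Q m m (X m); y' \<leftarrow> Q m (m+1) (X (m+1)); return_pmf ((G(m+1 := y'))(m := y))}"
    using finR nm by (subst Pi_pmf_insert') (auto simp: PR bind_assoc_pmf bind_return_pmf)
  also have "\<dots> = do {y \<leftarrow> Qm m (X m); y' \<leftarrow> Qm1 m (X (m+1)); return_pmf (X(m := y, m+1 := y'))}"
    unfolding GX by (simp add: Q_def)
  also have "\<dots> = do {
     Bm \<leftarrow> pmf_of_set {j \<in> {1..2*m+1}. X m j = 0};
     Cm \<leftarrow> bernoulli_pmf (1/2);
     Bm1 \<leftarrow> pmf_of_set {j \<in> {1..2*m+1}. X (m+1) j = 1};
     Cm1 \<leftarrow> bernoulli_pmf (1/2);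
     return_pmf (upd_entry (upd_entry X m Bm (if Cm then 1 else 0)) (m+1) Bm1 (if Cm1 then 1 else 0))
   }"
    by (simp add: Qm_def Qm1_def bind_assoc_pmf bind_return_pmf upd_entry_def)
  also have "\<dots> = do {
     Bm \<leftarrow> pmf_of_set {j \<in> {1..2*m+1}. X m j = 0};
     Bm1 \<leftarrow> pmf_of_set {j \<in> {1..2*m+1}. X (m+1) j = 1};
     Cm \<leftarrow> bernoulli_pmf (1/2);
     Cm1 \<leftarrow> bernoulli_pmf (1/2);
     return_pmf (upd_entry (upd_entry X m Bm (if Cm then 1 else 0)) (m+1) Bm1 (if Cm1 then 1 else 0))
   }"
    by (subst bind_commute_pmf) (rule refl)
  finally show ?thesis .
qed

definition AA :: "nat \<Rightarrow> (nat \<Rightarrow> nat \<Rightarrow> nat) set" where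
  "AA m = PiE_dflt {1..2*m+1} (\<lambda>_. 0) (Bset m)"

lemma V_pmf_unif:
  assumes m: "m \<ge> 1"
  shows "V_pmf m = pmf_of_set (AA m)"
proof -
  let ?n = "2*m+1"
  have fin: "finite {1..?n}" by simp
  have sX: "X r = (\<lambda>_. 0)" if "X \<in> set_pmf (X_pmf ?n)" "r \<notin> {1..?n}" for X r
    using that set_Pi_pmf_subset[OF fin, of "\<lambda>_. 0" "\<lambda>r. pmf_of_set (ind ` Sub ?n r)"]
    unfolding X_pmf_alt by auto
  have "V_pmf m = bind_pmf (X_pmf ?n) (\<lambda>X. Pi_pmf {1..?n} (\<lambda>_. 0) (\<lambda>r. Q m r (X r)))"
    unfolding V_pmf_def
    by (intro bind_pmf_cong refl inner_eq[symmetric] m) (rule sX)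
  also have "\<dots> = Pi_pmf {1..?n} (\<lambda>_. 0) (\<lambda>r. bind_pmf (pmf_of_set (ind ` Sub ?n r)) (Q m r))"
    unfolding X_pmf_alt by (rule Pi_pmf_bind[symmetric]) simp
  also have "\<dots> = Pi_pmf {1..?n} (\<lambda>_. 0) (\<lambda>r. pmf_of_set (Bset m r))"
    by (intro Pi_pmf_cong refl factor)
  also have "\<dots> = pmf_of_set (AA m)"
    unfolding AA_def
  proof (rule Pi_pmf_of_set)
    fix r assume "r \<in> {1..?n}"
    show "finite (Bset m r)" by (simp add: Bset_def)
    show "Bset m r \<noteq> {}" using \<open>r \<in> {1..?n}\<close> Sub_ne[of m ?n] Sub_ne[of r ?n]
      by (auto simp: Bset_def)
  qed simp
  finally show ?thesis .
qed


lemma sum_ind: "finite A \<Longrightarrow> sum (ind S) A = card (A \<inter> S)"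
  unfolding ind_def by (simp add: sum.If_cases Int_def)

lemma rowchar: "w \<in> ind ` Sub n k \<longleftrightarrow>
   (\<forall>j. w j \<in> {0,1}) \<and> (\<forall>j. j \<notin> {1..n} \<longrightarrow> w j = 0) \<and> sum w {1..n} = k"
proof
  assume "w \<in> ind ` Sub n k"
  then obtain S where S: "w = ind S" "S \<in> Sub n k" by auto
  have "{1..n} \<inter> S = S" using S by (auto simp: Sub_def)
  hence "sum w {1..n} = k" using S by (simp add: sum_ind Sub_def)
  thus "(\<forall>j. w j \<in> {0,1}) \<and> (\<forall>j. j \<notin> {1..n} \<longrightarrow> w j = 0) \<and> sum w {1..n} = k"
    using S by (auto simp: ind_def Sub_def)
next
  assume h: "(\<forall>j. w j \<in> {0,1}) \<and> (\<forall>j. j \<notin> {1..n} \<longrightarrow> w j = 0) \<and> sum w {1..n} = k"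
  define S where "S = {j \<in> {1..n}. w j = 1}"
  have wS: "w = ind S"
  proof
    fix j show "w j = ind S j" using h by (cases "j \<in> {1..n}") (auto simp: S_def ind_def)
  qed
  have "{1..n} \<inter> S = S" by (auto simp: S_def)
  hence "card S = k" using h wS by (simp add: sum_ind)
  hence "S \<in> Sub n k" by (auto simp: Sub_def S_def)
  thus "w \<in> ind ` Sub n k" using wS by auto
qed

lemma AA_iff: "e \<in> AA m \<longleftrightarrow>
   (\<forall>r j. (r \<notin> {1..2*m+1} \<or> j \<notin> {1..2*m+1}) \<longrightarrow> e r j = 0) \<and> feasible m e"
proof
  assume e: "e \<in> AA m"
  have out: "e r = (\<lambda>_. 0)" if "r \<notin> {1..2*m+1}" for r
    using e that by (auto simp: AA_def PiE_dflt_def)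
  have inn: "e r \<in> Bset m r" if "r \<in> {1..2*m+1}" for r
    using e that by (auto simp: AA_def PiE_dflt_def)
  have rc: "(\<forall>j. e r j \<in> {0,1}) \<and> (\<forall>j. j \<notin> {1..2*m+1} \<longrightarrow> e r j = 0) \<and>
      (if r = m \<or> r = m+1 then sum (e r) {1..2*m+1} \<in> {m, m+1} else sum (e r) {1..2*m+1} = r)"
    if "r \<in> {1..2*m+1}" for r
  proof (cases "r = m \<or> r = m+1")
    case True
    hence "e r \<in> ind ` Sub (2*m+1) m \<or> e r \<in> ind ` Sub (2*m+1) (m+1)"
      using inn[OF that] unfolding Bset_def image_Un by auto
    thus ?thesis using True unfolding rowchar by auto
  next
    case False
    hence "e r \<in> ind ` Sub (2*m+1) r"
      using inn[OF that] unfolding Bset_def by auto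
    thus ?thesis using False unfolding rowchar by auto
  qed
  show "(\<forall>r j. (r \<notin> {1..2*m+1} \<or> j \<notin> {1..2*m+1}) \<longrightarrow> e r j = 0) \<and> feasible m e"
  proof (intro conjI allI impI)
    fix r j assume "r \<notin> {1..2*m+1} \<or> j \<notin> {1..2*m+1}"
    thus "e r j = 0"
    proof
      assume "r \<notin> {1..2*m+1}" thus ?thesis using out[of r] by simp
    next
      assume j: "j \<notin> {1..2*m+1}"
      show ?thesis
      proof (cases "r \<in> {1..2*m+1}")
        case True thus ?thesis using rc[OF True] j by blast
      next
        case False thus ?thesis using out[of r] by simp
      qed
    qed
  next
    show "feasible m e" unfolding feasible_def
    proof (intro conjI ballI)
      fix r j assume "r \<in> {1..2*m+1}" "j \<in> {1..2*m+1}"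
      thus "e r j \<in> {0,1}" using rc[of r] by blast
    next
      fix r assume "r \<in> {1..2*m+1} - {m, m+1}"
      thus "(\<Sum>j = 1..2*m+1. e r j) = r" using rc[of r] by auto
    next
      fix r assume r: "r \<in> {m, m+1}"
      show "(\<Sum>j = 1..2*m+1. e r j) \<in> {m, m+1}"
      proof (cases "r \<in> {1..2*m+1}")
        case True thus ?thesis using rc[of r] r by auto
      next
        case False
        hence "r = 0" "m = 0" using r by auto
        thus ?thesis using out[of 0] by simp
      qed
    qed
  qed
next
  assume h: "(\<forall>r j. (r \<notin> {1..2*m+1} \<or> j \<notin> {1..2*m+1}) \<longrightarrow> e r j = 0) \<and> feasible m e"
  show "e \<in> AA m" unfolding AA_def PiE_dflt_def
  proof (intro CollectI allI conjI impI)
    fix r assume "r \<notin> {1..2*m+1}" thus "e r = (\<lambda>_. 0)" using h by auto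
  next
    fix r assume r: "r \<in> {1..2*m+1}"
    have vals: "\<forall>j. e r j \<in> {0,1}"
    proof
      fix j show "e r j \<in> {0,1}" using h r unfolding feasible_def by (cases "j \<in> {1..2*m+1}") auto
    qed
    have z: "\<forall>j. j \<notin> {1..2*m+1} \<longrightarrow> e r j = 0" using h by auto
    show "e r \<in> Bset m r"
    proof (cases "r = m \<or> r = m+1")
      case True
      hence "sum (e r) {1..2*m+1} \<in> {m, m+1}" using h unfolding feasible_def by auto
      hence "e r \<in> ind ` Sub (2*m+1) m \<or> e r \<in> ind ` Sub (2*m+1) (m+1)"
        using vals z by (auto simp only: rowchar insert_iff empty_iff)
      thus ?thesis using True unfolding Bset_def image_Un by auto
    next
      case False
      hence "sum (e r) {1..2*m+1} = r" using h r unfolding feasible_def by auto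
      hence "e r \<in> ind ` Sub (2*m+1) r"
        using vals z by (simp only: rowchar) blast
      thus ?thesis using False unfolding Bset_def by auto
    qed
  qed
qed

lemma AA_fin: "finite (AA m)"
  unfolding AA_def by (rule finite_PiE_dflt) (auto simp: Bset_def)

lemma AA_ne: "AA m \<noteq> {}"
proof -
  have "Bset m r \<noteq> {}" if "r \<in> {1..2*m+1}" for r
    using Sub_ne[of r "2*m+1"] Sub_ne[of m "2*m+1"] that by (auto simp: Bset_def)
  thus ?thesis by (simp add: AA_def)
qed

lemma AA_vals: "e \<in> AA m \<Longrightarrow> e r j \<in> {0,1}"
proof -
  assume e: "e \<in> AA m"
  show ?thesis
  proof (cases "r \<in> {1..2*m+1} \<and> j \<in> {1..2*m+1}")
    case True
    have "feasible m e" using e unfolding AA_iff by blast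
    thus ?thesis using True unfolding feasible_def by blast
  next
    case False
    hence "e r j = 0" using e unfolding AA_iff by blast
    thus ?thesis by simp
  qed
qed

lemma AA_out: "e \<in> AA m \<Longrightarrow> r \<notin> {1..2*m+1} \<or> j \<notin> {1..2*m+1} \<Longrightarrow> e r j = 0"
  unfolding AA_iff by blast

lemma AA_rowM:
  assumes "e \<in> AA m" "M \<in> {m, m+1}" "m \<ge> 1"
  shows "\<exists>S. e M = ind S \<and> S \<subseteq> {1..2*m+1} \<and> (card S = m \<or> card S = m+1)"
proof -
  have "M \<in> {1..2*m+1}" using assms by auto
  hence "e M \<in> Bset m M" using assms(1) by (auto simp: AA_def PiE_dflt_def)
  hence "e M \<in> ind ` (Sub (2*m+1) m \<union> Sub (2*m+1) (m+1))" using assms(2) by (auto simp: Bset_def)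
  thus ?thesis by (auto simp: Sub_def)
qed

lemma AA_updM:
  assumes "e \<in> AA m" "M \<in> {m, m+1}" "m \<ge> 1"
  shows "e(M := u) \<in> AA m \<longleftrightarrow> (\<exists>S. u = ind S \<and> S \<subseteq> {1..2*m+1} \<and> (card S = m \<or> card S = m+1))"
proof -
  have M: "M \<in> {1..2*m+1}" using assms by auto
  have B: "Bset m M = ind ` (Sub (2*m+1) m \<union> Sub (2*m+1) (m+1))" using assms(2) by (auto simp: Bset_def)
  have "e(M := u) \<in> AA m \<longleftrightarrow> u \<in> Bset m M"
    using assms(1) M unfolding AA_def PiE_dflt_def by auto
  also have "\<dots> \<longleftrightarrow> (\<exists>S. u = ind S \<and> S \<subseteq> {1..2*m+1} \<and> (card S = m \<or> card S = m+1))"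
    unfolding B by (auto simp: Sub_def)
  finally show ?thesis .
qed


lemma flip_upd: "flip e r i = e(r := (e r)(i := 1 - e r i))"
  by (simp add: flip_def upd_entry_def)

lemma swap_upd: "swap e r i j = e(r := (e r)(i := e r j, j := e r i))"
  by (simp add: swap_def)

lemma bulb_01: "bulb m e k \<in> {0,1}"
  unfolding bulb_def by auto

lemma bulb_le1: "bulb m e k \<le> 1"
  unfolding bulb_def by simp

lemma bulb_upd:
  assumes M: "M \<in> {1..2*m+1}" and u: "u k \<in> {0,1}" and eM: "e M k \<in> {0,1}"
  shows "bulb m (e(M := u)) k = (if u k = e M k then bulb m e k else 1 - bulb m e k)"
proof -
  define x where "x = (\<Sum>r\<in>{1..2*m+1} - {M}. e r k)"
  have s1: "(\<Sum>r=1..2*m+1. (e(M := u)) r k) = u k + x"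
    unfolding x_def using M by (subst sum.remove[of _ M]) (auto intro!: sum.cong)
  have s2: "(\<Sum>r=1..2*m+1. e r k) = e M k + x"
    unfolding x_def using M by (subst sum.remove[of _ M]) auto
  show ?thesis unfolding bulb_def s1 s2 using u eM by auto presburger+
qed

lemma sum_toggle:
  assumes fin: "finite A" and T: "T \<subseteq> A" and f01: "\<And>k. k \<in> A \<Longrightarrow> f k \<le> (1::nat)"
    and g: "\<And>k. k \<in> A \<Longrightarrow> g k = (if k \<in> T then 1 - f k else f k)"
  shows "int (sum g A) = int (sum f A) + (\<Sum>k\<in>T. 1 - 2 * int (f k))"
proof -
  have "int (sum g A) = (\<Sum>k\<in>A. int (f k) + (if k \<in> T then 1 - 2 * int (f k) else 0))"
    unfolding of_nat_sum by (intro sum.cong refl) (use f01 g in auto)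
  also have "\<dots> = int (sum f A) + (\<Sum>k\<in>A. if k \<in> T then 1 - 2 * int (f k) else 0)"
    by (simp add: sum.distrib of_nat_sum)
  also have "(\<Sum>k\<in>A. if k \<in> T then 1 - 2 * int (f k) else 0) = (\<Sum>k\<in>T. 1 - 2 * int (f k))"
    using fin T by (simp add: sum.inter_restrict[symmetric] Int_absorb1)
  finally show ?thesis .
qed

lemma Vtot_toggle:
  assumes T: "T \<subseteq> {1..2*m+1}"
    and b: "\<And>k. k \<in> {1..2*m+1} \<Longrightarrow> bulb m e' k = (if k \<in> T then 1 - bulb m e k else bulb m e k)"
  shows "int (Vtot m e') = int (Vtot m e) + (\<Sum>k\<in>T. 1 - 2 * int (bulb m e k))"
  unfolding Vtot_def
  by (rule sum_toggle[OF _ T]) (use b bulb_le1 in auto)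

lemma bulb_flip:
  assumes V: "V \<in> AA m" and M: "M \<in> {1..2*m+1}"
  shows "bulb m (flip V M i) k = (if k = i then 1 - bulb m V k else bulb m V k)"
proof -
  have "bulb m (flip V M i) k = (if ((V M)(i := 1 - V M i)) k = V M k then bulb m V k else 1 - bulb m V k)"
    unfolding flip_upd using AA_vals[OF V, of M] M by (intro bulb_upd) auto
  thus ?thesis using AA_vals[OF V, of M i] by auto
qed

lemma bulb_swap:
  assumes V: "V \<in> AA m" and M: "M \<in> {1..2*m+1}" and d: "V M i \<noteq> V M j"
  shows "bulb m (swap V M i j) k = (if k = i \<or> k = j then 1 - bulb m V k else bulb m V k)"
proof -
  have "bulb m (swap V M i j) k = (if ((V M)(i := V M j, j := V M i)) k = V M k then bulb m V k else 1 - bulb m V k)"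
    unfolding swap_upd using AA_vals[OF V, of M] M by (intro bulb_upd) auto
  thus ?thesis using d by auto
qed

lemma Vtot_flip:
  assumes V: "V \<in> AA m" and M: "M \<in> {1..2*m+1}" and i: "i \<in> {1..2*m+1}"
  shows "int (Vtot m (flip V M i)) = int (Vtot m V) + 1 - 2 * int (bulb m V i)"
  using Vtot_toggle[of "{i}" m "flip V M i" V] i bulb_flip[OF V M] by auto

lemma Vtot_swap:
  assumes V: "V \<in> AA m" and M: "M \<in> {1..2*m+1}" and i: "i \<in> {1..2*m+1}" and j: "j \<in> {1..2*m+1}"
    and d: "V M i \<noteq> V M j"
  shows "int (Vtot m (swap V M i j)) = int (Vtot m V) + (1 - 2 * int (bulb m V i)) + (1 - 2 * int (bulb m V j))"
proof -
  have ij: "i \<noteq> j" using d by auto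
  have "int (Vtot m (swap V M i j)) = int (Vtot m V) + (\<Sum>k\<in>{i,j}. 1 - 2 * int (bulb m V k))"
    using i j by (intro Vtot_toggle) (auto simp: bulb_swap[OF V M d])
  thus ?thesis using ij by simp
qed


lemma flip_row: "(ind S)(i := 1 - ind S i) = ind (if i \<in> S then S - {i} else insert i S)"
  by (auto simp: ind_def fun_eq_iff)

lemma swap_row1: "i \<in> S \<Longrightarrow> j \<notin> S \<Longrightarrow> (ind S)(i := ind S j, j := ind S i) = ind (insert j (S - {i}))"
  by (auto simp: ind_def fun_eq_iff)

lemma swap_row2: "i \<notin> S \<Longrightarrow> j \<in> S \<Longrightarrow> (ind S)(i := ind S j, j := ind S i) = ind (insert i (S - {j}))"
  by (auto simp: ind_def fun_eq_iff)

lemma ind_eq_iff: "ind S = ind T \<longleftrightarrow> S = T"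
  using inj_ind by (auto dest: injD)

definition rS :: "nat \<Rightarrow> arr \<Rightarrow> nat \<Rightarrow> nat set" where
  "rS m V M = {j \<in> {1..2*m+1}. V M j = 1}"

lemma rS_sub: "rS m V M \<subseteq> {1..2*m+1}" by (auto simp: rS_def)
lemma rS_fin: "finite (rS m V M)" by (rule finite_subset[OF rS_sub]) simp

lemma row_ind: "V \<in> AA m \<Longrightarrow> V M = ind (rS m V M)"
proof
  fix j assume V: "V \<in> AA m"
  show "V M j = ind (rS m V M) j"
    using AA_vals[OF V, of M j] AA_out[OF V, of M j] by (auto simp: ind_def rS_def)
qed

lemma rS_card:
  assumes V: "V \<in> AA m" and M: "M \<in> {m, m+1}" and m: "m \<ge> 1"
  shows "card (rS m V M) = m \<or> card (rS m V M) = m+1"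
proof -
  obtain S where S: "V M = ind S" "S \<subseteq> {1..2*m+1}" "card S = m \<or> card S = m+1"
    using AA_rowM[OF V M m] by blast
  have "rS m V M = S" using row_ind[OF V, of M] S(1) by (simp add: ind_eq_iff)
  thus ?thesis using S by simp
qed

lemma flip_AA:
  assumes V: "V \<in> AA m" and M: "M \<in> {m, m+1}" and m: "m \<ge> 1" and i: "i \<in> {1..2*m+1}"
  shows "flip V M i \<in> AA m \<longleftrightarrow> (if i \<in> rS m V M then card (rS m V M) = m+1 else card (rS m V M) = m)"
proof -
  define S where "S = rS m V M"
  have fS: "finite S" "S \<subseteq> {1..2*m+1}" unfolding S_def by (rule rS_fin, rule rS_sub)
  have cS: "card S = m \<or> card S = m+1" unfolding S_def by (rule rS_card[OF V M m])
  define S' where "S' = (if i \<in> S then S - {i} else insert i S)"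
  have VM: "V M = ind S" unfolding S_def by (rule row_ind[OF V])
  have fl: "flip V M i = V(M := ind S')"
    unfolding flip_upd VM flip_row S'_def ..
  have "flip V M i \<in> AA m \<longleftrightarrow> (\<exists>T. ind S' = ind T \<and> T \<subseteq> {1..2*m+1} \<and> (card T = m \<or> card T = m+1))"
    unfolding fl by (rule AA_updM[OF V M m])
  also have "\<dots> \<longleftrightarrow> (card S' = m \<or> card S' = m+1)"
    using fS i by (auto simp: ind_eq_iff S'_def)
  also have "\<dots> \<longleftrightarrow> (if i \<in> S then card S = m+1 else card S = m)"
    using fS cS m by (auto simp: S'_def)
  finally show ?thesis unfolding S_def .
qed

lemma feas_flip_iff:
  assumes V: "V \<in> AA m" and M: "M \<in> {1..2*m+1}" and i: "i \<in> {1..2*m+1}"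
  shows "feasible m (flip V M i) \<longleftrightarrow> flip V M i \<in> AA m"
proof -
  have "\<forall>r j. (r \<notin> {1..2*m+1} \<or> j \<notin> {1..2*m+1}) \<longrightarrow> flip V M i r j = 0"
    using AA_out[OF V] M i by (auto simp: flip_upd)
  thus ?thesis unfolding AA_iff by blast
qed

lemma swap_AA:
  assumes V: "V \<in> AA m" and M: "M \<in> {m, m+1}" and m: "m \<ge> 1"
    and i: "i \<in> {1..2*m+1}" and j: "j \<in> {1..2*m+1}" and d: "V M i \<noteq> V M j"
  shows "swap V M i j \<in> AA m"
proof -
  define S where "S = rS m V M"
  have fS: "finite S" "S \<subseteq> {1..2*m+1}" unfolding S_def by (rule rS_fin, rule rS_sub)
  have cS: "card S = m \<or> card S = m+1" unfolding S_def by (rule rS_card[OF V M m])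
  have VM: "V M = ind S" unfolding S_def by (rule row_ind[OF V])
  show ?thesis
  proof (cases "i \<in> S")
    case True
    hence jS: "j \<notin> S" using d VM by (auto simp: ind_def)
    have sw: "swap V M i j = V(M := ind (insert j (S - {i})))"
      unfolding swap_upd VM using swap_row1[OF True jS] by simp
    have "card S > 0" using True fS(1) card_gt_0_iff by blast
    hence "card (insert j (S - {i})) = card S" using True jS fS by (simp add: card_insert_if)
    thus ?thesis unfolding sw AA_updM[OF V M m] using cS fS j
      by (intro exI[of _ "insert j (S - {i})"]) auto
  next
    case False
    hence jS: "j \<in> S" using d VM by (auto simp: ind_def split: if_splits)
    have sw: "swap V M i j = V(M := ind (insert i (S - {j})))"
      unfolding swap_upd VM using swap_row2[OF False jS] by simp
    have "card S > 0" using jS fS(1) card_gt_0_iff by blast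
    hence "card (insert i (S - {j})) = card S" using False jS fS by (simp add: card_insert_if)
    thus ?thesis unfolding sw AA_updM[OF V M m] using cS fS i
      by (intro exI[of _ "insert i (S - {j})"]) auto
  qed
qed

lemma Js_eq:
  assumes V: "V \<in> AA m" and i: "i \<in> {1..2*m+1}"
  shows "{j \<in> {1..2*m+1}. V M j \<noteq> V M i} = (if i \<in> rS m V M then {1..2*m+1} - rS m V M else rS m V M)"
  using row_ind[OF V, of M] rS_sub[of m V M] i by (auto simp: ind_def)

lemma card_Js:
  assumes V: "V \<in> AA m" and i: "i \<in> {1..2*m+1}"
  shows "card {j \<in> {1..2*m+1}. V M j \<noteq> V M i} =
     (if i \<in> rS m V M then 2*m+1 - card (rS m V M) else card (rS m V M))"
  unfolding Js_eq[OF V i] using rS_sub[of m V M] rS_fin[of m V M] by (simp add: card_Diff_subset)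


definition cm :: "nat \<Rightarrow> arr \<Rightarrow> arr" where
  "cm m V = V(m := (\<lambda>j. if j \<in> {1..2*m+1} then 1 - V m j else 0))"

lemma cm_row: "V \<in> AA m \<Longrightarrow> (\<lambda>j. if j \<in> {1..2*m+1} then 1 - V m j else 0) = ind ({1..2*m+1} - rS m V m)"
  using AA_vals[of V m m] by (force simp: ind_def rS_def fun_eq_iff)

lemma cm_AA:
  assumes m: "m \<ge> 1" and V: "V \<in> AA m"
  shows "cm m V \<in> AA m"
proof -
  have c: "card (rS m V m) = m \<or> card (rS m V m) = m+1" by (rule rS_card[OF V _ m]) simp
  have "card ({1..2*m+1} - rS m V m) = 2*m+1 - card (rS m V m)"
    using rS_sub[of m V m] by (simp add: card_Diff_subset rS_fin)
  hence cc: "card ({1..2*m+1} - rS m V m) = m \<or> card ({1..2*m+1} - rS m V m) = m+1" using c by auto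
  have Mm: "m \<in> {m, m+1}" by simp
  show ?thesis unfolding cm_def AA_updM[OF V Mm m] cm_row[OF V] using cc
    by (intro exI[of _ "{1..2*m+1} - rS m V m"]) auto
qed

lemma cm_cm:
  assumes V: "V \<in> AA m"
  shows "cm m (cm m V) = V"
proof -
  have e: "(\<lambda>j. if j \<in> {1..2*m+1} then 1 - (if j \<in> {1..2*m+1} then 1 - V m j else 0) else 0) = V m"
  proof
    fix j show "(if j \<in> {1..2*m+1} then 1 - (if j \<in> {1..2*m+1} then 1 - V m j else 0) else 0) = V m j"
      using AA_vals[OF V, of m j] AA_out[OF V, of m j] by auto
  qed
  show ?thesis by (simp only: cm_def fun_upd_upd fun_upd_same e fun_upd_triv)
qed

lemma bulb_cm:
  assumes V: "V \<in> AA m" and k: "k \<in> {1..2*m+1}" and m1: "m \<ge> 1"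
  shows "bulb m (cm m V) k = 1 - bulb m V k"
proof -
  show ?thesis
  proof -
    have mm: "m \<in> {1..2*m+1}" using m1 by auto
    have "bulb m (cm m V) k = (if (\<lambda>j. if j \<in> {1..2*m+1} then 1 - V m j else 0) k = V m k
            then bulb m V k else 1 - bulb m V k)"
      unfolding cm_def using AA_vals[OF V, of m k] by (intro bulb_upd[OF mm]) auto
    thus ?thesis using k AA_vals[OF V, of m k] by auto
  qed
qed

lemma card_Ai:
  assumes m: "m \<ge> 1" and i: "i \<in> {1..2*m+1}"
  shows "card (AA m) = 2 * card {V \<in> AA m. bulb m V i = 1}"
proof -
  define A1 where "A1 = {V \<in> AA m. bulb m V i = 1}"
  define A0 where "A0 = {V \<in> AA m. bulb m V i = 0}"
  have inj: "inj_on (cm m) (AA m)"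
    by (rule inj_on_inverseI[of _ "cm m"]) (rule cm_cm)
  have f0: "finite A0" "finite A1" unfolding A0_def A1_def using AA_fin by auto
  have i1: "cm m ` A1 \<subseteq> A0" unfolding A0_def A1_def using cm_AA[OF m] bulb_cm[OF _ i m] by auto
  have i0: "cm m ` A0 \<subseteq> A1" unfolding A0_def A1_def using cm_AA[OF m] bulb_cm[OF _ i m] by auto
  have "card A1 \<le> card A0"
    by (rule card_inj_on_le[OF inj_on_subset[OF inj] i1 f0(1)]) (auto simp: A1_def)
  moreover have "card A0 \<le> card A1"
    by (rule card_inj_on_le[OF inj_on_subset[OF inj] i0 f0(2)]) (auto simp: A0_def)
  moreover have "AA m = A1 \<union> A0"
  proof
    show "AA m \<subseteq> A1 \<union> A0"
    proof
      fix V assume "V \<in> AA m" thus "V \<in> A1 \<union> A0" using bulb_01[of m V i] by (auto simp: A1_def A0_def)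
    qed
  qed (auto simp: A1_def A0_def)
  moreover have "A1 \<inter> A0 = {}" unfolding A0_def A1_def by auto
  ultimately have "card (AA m) = card A1 + card A0" using f0 by (simp add: card_Un_disjoint)
  thus ?thesis using \<open>card A1 \<le> card A0\<close> \<open>card A0 \<le> card A1\<close> unfolding A1_def by simp
qed


definition Js :: "nat \<Rightarrow> nat \<Rightarrow> arr \<Rightarrow> nat \<Rightarrow> nat set" where
  "Js m i V M = {j \<in> {1..2*m+1}. V M j \<noteq> V M i}"

definition pF :: "nat \<Rightarrow> nat \<Rightarrow> arr \<Rightarrow> nat \<Rightarrow> real" where
  "pF m i V M = (if feasible m (flip V M i) then 1 / real (m+1) else 0)"

lemma swap_swap: "swap (swap e r i j) r i j = e"
  by (auto simp: swap_def fun_eq_iff)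

lemma flip_flip: "e r i \<le> 1 \<Longrightarrow> flip (flip e r i) r i = e"
  by (auto simp: flip_upd fun_eq_iff)

lemma Js_swap: "J \<in> {1..2*m+1} \<Longrightarrow> (J \<in> Js m i (swap e M i J) M \<longleftrightarrow> J \<in> Js m i e M)"
  by (auto simp: Js_def swap_def)

lemma card_Js':
  assumes V: "V \<in> AA m" and i: "i \<in> {1..2*m+1}"
  shows "card (Js m i V M) = (if i \<in> rS m V M then 2*m+1 - card (rS m V M) else card (rS m V M))"
  unfolding Js_def by (rule card_Js[OF V i])

lemma Js_ne:
  assumes V: "V \<in> AA m" and M: "M \<in> {m, m+1}" and m: "m \<ge> 1" and i: "i \<in> {1..2*m+1}"
  shows "Js m i V M \<noteq> {}" "finite (Js m i V M)"
proof -
  have "card (Js m i V M) > 0"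
    using card_Js'[OF V i, of M] rS_card[OF V M m] m by auto
  thus "Js m i V M \<noteq> {}" by auto
  show "finite (Js m i V M)" by (simp add: Js_def)
qed

lemma swap_rS:
  assumes w: "w \<in> AA m" and M: "M \<in> {m, m+1}" and m: "m \<ge> 1"
    and i: "i \<in> {1..2*m+1}" and J: "J \<in> Js m i w M"
  shows "(i \<in> rS m (swap w M i J) M \<longleftrightarrow> i \<notin> rS m w M)
         \<and> card (rS m (swap w M i J) M) = card (rS m w M)"
proof -
  define S where "S = rS m w M"
  have fS: "finite S" "S \<subseteq> {1..2*m+1}" unfolding S_def by (rule rS_fin, rule rS_sub)
  have Jr: "J \<in> {1..2*m+1}" and d: "w M J \<noteq> w M i" using J by (auto simp: Js_def)
  have sA: "swap w M i J \<in> AA m" using swap_AA[OF w M m i Jr] d by auto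
  have wM: "w M = ind S" unfolding S_def by (rule row_ind[OF w])
  have eq: "ind (rS m (swap w M i J) M) = (swap w M i J) M" by (rule row_ind[OF sA, symmetric])
  show ?thesis
  proof (cases "i \<in> S")
    case True
    hence jS: "J \<notin> S" using d wM by (auto simp: ind_def split: if_splits)
    have "(swap w M i J) M = ind (insert J (S - {i}))"
      unfolding swap_upd wM using swap_row1[OF True jS] by simp
    hence r: "rS m (swap w M i J) M = insert J (S - {i})" using eq by (simp add: ind_eq_iff)
    have "card S > 0" using True fS(1) card_gt_0_iff by blast
    thus ?thesis unfolding r S_def[symmetric] using True jS fS by (auto simp: card_insert_if)
  next
    case False
    hence jS: "J \<in> S" using d wM by (auto simp: ind_def split: if_splits)
    have "(swap w M i J) M = ind (insert i (S - {J}))"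
      unfolding swap_upd wM using swap_row2[OF False jS] by simp
    hence r: "rS m (swap w M i J) M = insert i (S - {J})" using eq by (simp add: ind_eq_iff)
    have "card S > 0" using jS fS(1) card_gt_0_iff by blast
    thus ?thesis unfolding r S_def[symmetric] using False jS fS by (auto simp: card_insert_if)
  qed
qed


definition kk :: "nat \<Rightarrow> nat \<Rightarrow> arr \<Rightarrow> nat \<Rightarrow> arr \<Rightarrow> real" where
  "kk m i V M w = pF m i V M * of_bool (flip V M i = w)
     + (1 - pF m i V M) * (\<Sum>J\<in>Js m i V M. of_bool (swap V M i J = w)) / card (Js m i V M)"

lemma sum_restrict_sub: "finite R \<Longrightarrow> B \<subseteq> R \<Longrightarrow> sum f B = (\<Sum>x\<in>R. if x \<in> B then f x else 0)"
proof -
  assume "finite R" "B \<subseteq> R"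
  hence "R \<inter> B = B" by auto
  thus ?thesis using sum.inter_restrict[OF \<open>finite R\<close>, of f B] by simp
qed

lemma key_zero:
  assumes m: "m \<ge> 1" and i: "i \<in> {1..2*m+1}" and M: "M \<in> {m, m+1}"
    and V: "V \<in> AA m" "bulb m V i \<noteq> 1"
    and w: "\<not> (w \<in> AA m \<and> bulb m w i = 1)"
  shows "kk m i V M w = 0"
proof -
  have Mr: "M \<in> {1..2*m+1}" using M m by auto
  have b0: "bulb m V i = 0" using V(2) bulb_01[of m V i] by auto
  have "pF m i V M * of_bool (flip V M i = w) = 0"
  proof (cases "feasible m (flip V M i)")
    case True
    hence "flip V M i \<in> AA m" using feas_flip_iff[OF V(1) Mr i] by simp
    moreover have "bulb m (flip V M i) i = 1" using bulb_flip[OF V(1) Mr] b0 by simp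
    ultimately have "flip V M i \<noteq> w" using w by auto
    thus ?thesis by simp
  qed (simp add: pF_def)
  moreover have "(\<Sum>J\<in>Js m i V M. of_bool (swap V M i J = w)) = (0::real)"
  proof (intro sum.neutral ballI)
    fix J assume J: "J \<in> Js m i V M"
    hence Jr: "J \<in> {1..2*m+1}" and d: "V M i \<noteq> V M J" by (auto simp: Js_def)
    have "swap V M i J \<in> AA m" by (rule swap_AA[OF V(1) M m i Jr d])
    moreover have "bulb m (swap V M i J) i = 1" using bulb_swap[OF V(1) Mr d] b0 by simp
    ultimately have "swap V M i J \<noteq> w" using w by auto
    thus "of_bool (swap V M i J = w) = (0::real)" by simp
  qed
  ultimately show ?thesis unfolding kk_def by simp
qed

lemma partA:
  assumes m: "m \<ge> 1" and i: "i \<in> {1..2*m+1}" and M: "M \<in> {m, m+1}"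
    and w: "w \<in> AA m" "bulb m w i = 1"
  shows "(\<Sum>V\<in>{V \<in> AA m. bulb m V i \<noteq> 1}. pF m i V M * of_bool (flip V M i = w))
       = of_bool (flip w M i \<in> AA m) / real (m+1)"
proof -
  let ?A0 = "{V \<in> AA m. bulb m V i \<noteq> 1}"
  have Mr: "M \<in> {1..2*m+1}" using M m by auto
  have fin: "finite ?A0" using AA_fin by auto
  have "(\<Sum>V\<in>?A0. pF m i V M * of_bool (flip V M i = w))
      = (\<Sum>V\<in>?A0. if V = flip w M i then pF m i V M else 0)"
  proof (intro sum.cong refl)
    fix V assume V: "V \<in> ?A0"
    have "flip V M i = w \<longleftrightarrow> V = flip w M i"
    proof
      assume "flip V M i = w"
      thus "V = flip w M i" using flip_flip[of V M i] AA_vals[of V m M i] V by auto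
    next
      assume "V = flip w M i"
      thus "flip V M i = w" using flip_flip[of w M i] AA_vals[OF w(1), of M i] by auto
    qed
    thus "pF m i V M * of_bool (flip V M i = w) = (if V = flip w M i then pF m i V M else 0)" by simp
  qed
  also have "\<dots> = (if flip w M i \<in> ?A0 then pF m i (flip w M i) M else 0)"
    using fin by (simp add: sum.delta')
  also have "\<dots> = of_bool (flip w M i \<in> AA m) / real (m+1)"
  proof -
    have "bulb m (flip w M i) i = 0" using bulb_flip[OF w(1) Mr] w(2) by simp
    moreover have "feasible m (flip (flip w M i) M i)"
      using flip_flip[of w M i] AA_vals[OF w(1), of M i] w(1) unfolding AA_iff by auto
    ultimately show ?thesis by (auto simp: pF_def)
  qed
  finally show ?thesis .
qed

lemma partB:
  assumes m: "m \<ge> 1" and i: "i \<in> {1..2*m+1}" and M: "M \<in> {m, m+1}"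
    and w: "w \<in> AA m" "bulb m w i = 1"
  shows "(\<Sum>V\<in>{V \<in> AA m. bulb m V i \<noteq> 1}.
            (1 - pF m i V M) * (\<Sum>J\<in>Js m i V M. of_bool (swap V M i J = w)) / card (Js m i V M))
       = (\<Sum>J\<in>Js m i w M. (1 - pF m i (swap w M i J) M) / card (Js m i (swap w M i J) M))"
proof -
  let ?A0 = "{V \<in> AA m. bulb m V i \<noteq> 1}"
  let ?R = "{1..2*m+1}"
  let ?c = "\<lambda>V. (1 - pF m i V M) / card (Js m i V M)"
  have Mr: "M \<in> ?R" using M m by auto
  have fin: "finite ?A0" using AA_fin by auto
  have JsR: "Js m i V M \<subseteq> ?R" for V by (auto simp: Js_def)
  have "(\<Sum>V\<in>?A0. (1 - pF m i V M) * (\<Sum>J\<in>Js m i V M. of_bool (swap V M i J = w)) / card (Js m i V M))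
      = (\<Sum>V\<in>?A0. \<Sum>J\<in>?R. if J \<in> Js m i V M \<and> V = swap w M i J then ?c V else 0)"
  proof (intro sum.cong refl)
    fix V assume V: "V \<in> ?A0"
    have "(1 - pF m i V M) * (\<Sum>J\<in>Js m i V M. of_bool (swap V M i J = w)) / card (Js m i V M)
        = (\<Sum>J\<in>Js m i V M. if V = swap w M i J then ?c V else 0)"
      by (simp add: sum_distrib_left sum_divide_distrib swap_swap
            flip: swap_swap[of V M i] cong: if_cong) (intro sum.cong refl, auto simp: swap_swap)
    also have "\<dots> = (\<Sum>J\<in>?R. if J \<in> Js m i V M then (if V = swap w M i J then ?c V else 0) else 0)"
      by (rule sum_restrict_sub[OF _ JsR[of V]]) simp
    also have "\<dots> = (\<Sum>J\<in>?R. if J \<in> Js m i V M \<and> V = swap w M i J then ?c V else 0)"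
      by (intro sum.cong refl) auto
    finally show "(1 - pF m i V M) * (\<Sum>J\<in>Js m i V M. of_bool (swap V M i J = w)) / card (Js m i V M)
        = (\<Sum>J\<in>?R. if J \<in> Js m i V M \<and> V = swap w M i J then ?c V else 0)" .
  qed
  also have "\<dots> = (\<Sum>J\<in>?R. \<Sum>V\<in>?A0. if V = swap w M i J then (if J \<in> Js m i V M then ?c V else 0) else 0)"
    by (subst sum.swap) (intro sum.cong refl, auto)
  also have "\<dots> = (\<Sum>J\<in>?R. if swap w M i J \<in> ?A0 then (if J \<in> Js m i (swap w M i J) M then ?c (swap w M i J) else 0) else 0)"
    using fin by (simp add: sum.delta')
  also have "\<dots> = (\<Sum>J\<in>?R. if J \<in> Js m i w M then ?c (swap w M i J) else 0)"
  proof (intro sum.cong refl)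
    fix J assume Jr: "J \<in> ?R"
    show "(if swap w M i J \<in> ?A0 then (if J \<in> Js m i (swap w M i J) M then ?c (swap w M i J) else 0) else 0)
        = (if J \<in> Js m i w M then ?c (swap w M i J) else 0)"
    proof (cases "J \<in> Js m i w M")
      case True
      hence d: "w M i \<noteq> w M J" by (auto simp: Js_def)
      have "swap w M i J \<in> AA m" by (rule swap_AA[OF w(1) M m i Jr d])
      moreover have "bulb m (swap w M i J) i = 0" using bulb_swap[OF w(1) Mr d] w(2) by simp
      ultimately show ?thesis using True Js_swap[OF Jr] by simp
    next
      case False thus ?thesis using Js_swap[OF Jr] by simp
    qed
  qed
  also have "\<dots> = (\<Sum>J\<in>Js m i w M. ?c (swap w M i J))"
    by (rule sum_restrict_sub[OF _ JsR[of w], symmetric]) simp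
  finally show ?thesis .
qed

lemma arith_final:
  fixes m s :: nat
  assumes m: "m \<ge> 1" and s: "s = m \<or> s = m+1"
  shows "of_bool (if t then s = m+1 else s = m) / real (m+1)
    + real (if t then 2*m+1 - s else s) *
      ((1 - (if (if t then s = m else s = m+1) then 1 / real (m+1) else 0))
        / real (if t then s else 2*m+1 - s)) = 1"
proof -
  have m0: "real m > 0" using m by simp
  have "real m * real m \<ge> 0" by simp
  hence m2: "real m + real m * real m \<noteq> 0" using m0 by linarith
  show ?thesis
    using s
  proof
    assume s: "s = m"
    show ?thesis
    proof (cases t)
      case True
      have "2*m+1 - s = m+1" using s by simp
      thus ?thesis using True s m0 m2 by (simp add: field_simps)
    next
      case False
      thus ?thesis using s m0 by (simp add: field_simps)
    qed
  next
    assume s: "s = m+1"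
    show ?thesis
    proof (cases t)
      case True
      have "2*m+1 - s = m" using s by simp
      thus ?thesis using True s m0 m2 by (simp add: field_simps)
    next
      case False
      have "2*m+1 - s = m" using s by simp
      thus ?thesis using False s m0 m2 by (simp add: field_simps)
    qed
  qed
qed

lemma key_one:
  assumes m: "m \<ge> 1" and i: "i \<in> {1..2*m+1}" and M: "M \<in> {m, m+1}"
    and w: "w \<in> AA m" "bulb m w i = 1"
  shows "(\<Sum>V\<in>{V \<in> AA m. bulb m V i \<noteq> 1}. kk m i V M w) = 1"
proof -
  let ?A0 = "{V \<in> AA m. bulb m V i \<noteq> 1}"
  define S where "S = rS m w M"
  define s where "s = card S"
  define t where "t = (i \<in> S)"
  have Mr: "M \<in> {1..2*m+1}" using M m by auto
  have sc: "s = m \<or> s = m+1" unfolding s_def S_def by (rule rS_card[OF w(1) M m])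
  have cJ: "(1 - pF m i (swap w M i J) M) / card (Js m i (swap w M i J) M)
       = (1 - (if (if t then s = m else s = m+1) then 1 / real (m+1) else 0))
          / real (if t then s else 2*m+1 - s)"
    if J: "J \<in> Js m i w M" for J
  proof -
    let ?W = "swap w M i J"
    have Jr: "J \<in> {1..2*m+1}" and d: "w M i \<noteq> w M J" using J by (auto simp: Js_def)
    have WA: "?W \<in> AA m" by (rule swap_AA[OF w(1) M m i Jr d])
    note sr = swap_rS[OF w(1) M m i J]
    have "feasible m (flip ?W M i) \<longleftrightarrow> (if t then s = m else s = m+1)"
      unfolding feas_flip_iff[OF WA Mr i] flip_AA[OF WA M m i]
      using sr unfolding t_def s_def S_def by auto
    moreover have "card (Js m i ?W M) = (if t then s else 2*m+1 - s)"
      unfolding card_Js'[OF WA i] using sr unfolding t_def s_def S_def by auto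
    ultimately show ?thesis by (simp add: pF_def)
  qed
  have "(\<Sum>V\<in>?A0. kk m i V M w)
      = (\<Sum>V\<in>?A0. pF m i V M * of_bool (flip V M i = w))
        + (\<Sum>V\<in>?A0. (1 - pF m i V M) * (\<Sum>J\<in>Js m i V M. of_bool (swap V M i J = w)) / card (Js m i V M))"
    unfolding kk_def by (rule sum.distrib)
  also have "\<dots> = of_bool (flip w M i \<in> AA m) / real (m+1)
      + (\<Sum>J\<in>Js m i w M. (1 - pF m i (swap w M i J) M) / card (Js m i (swap w M i J) M))"
    by (simp only: partA[OF m i M w] partB[OF m i M w])
  also have "(\<Sum>J\<in>Js m i w M. (1 - pF m i (swap w M i J) M) / card (Js m i (swap w M i J) M))
     = real (card (Js m i w M)) * ((1 - (if (if t then s = m else s = m+1) then 1 / real (m+1) else 0))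
          / real (if t then s else 2*m+1 - s))"
    by (simp add: cJ)
  also have "card (Js m i w M) = (if t then 2*m+1 - s else s)"
    unfolding card_Js'[OF w(1) i] t_def s_def S_def by simp
  also have "flip w M i \<in> AA m \<longleftrightarrow> (if t then s = m+1 else s = m)"
    unfolding flip_AA[OF w(1) M m i] t_def s_def S_def by simp
  finally show ?thesis using arith_final[OF m sc, of t] by simp
qed


lemma pmf_bind_bern:
  assumes "0 \<le> p" "p \<le> 1"
  shows "pmf (bind_pmf (bernoulli_pmf p) f) x = p * pmf (f True) x + (1 - p) * pmf (f False) x"
proof -
  have "pmf (bind_pmf (bernoulli_pmf p) f) x = (\<Sum>a\<in>UNIV. pmf (bernoulli_pmf p) a *\<^sub>R pmf (f a) x)"
    unfolding pmf_bind by (rule integral_measure_pmf) auto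
  also have "\<dots> = p * pmf (f True) x + (1 - p) * pmf (f False) x"
    using assms by (simp add: UNIV_bool)
  finally show ?thesis .
qed

definition KK :: "nat \<Rightarrow> nat \<Rightarrow> arr \<Rightarrow> arr pmf" where
  "KK m i V = bind_pmf (pmf_of_set {m, m+1}) (\<lambda>M. bind_pmf (bernoulli_pmf (pF m i V M))
      (\<lambda>F. bind_pmf (pmf_of_set (Js m i V M)) (\<lambda>J. return_pmf (if F then flip V M i else swap V M i J))))"

lemma lhs_alt:
  assumes m: "m \<ge> 1"
  shows "map_pmf (\<lambda>(V, M, F, J). Vi m V M F J i) (joint m i)
    = bind_pmf (pmf_of_set (AA m)) (\<lambda>V. if bulb m V i = 1 then return_pmf V else KK m i V)"
  unfolding joint_def V_pmf_unif[OF m]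
  by (auto simp: map_bind_pmf Vi_def KK_def pF_def Js_def intro!: bind_pmf_cong)

lemma pmf_KK:
  assumes m: "m \<ge> 1" and i: "i \<in> {1..2*m+1}" and V: "V \<in> AA m"
  shows "pmf (KK m i V) w = (kk m i V m w + kk m i V (m+1) w) / 2"
proof -
  have inner: "pmf (bind_pmf (bernoulli_pmf (pF m i V M))
      (\<lambda>F. bind_pmf (pmf_of_set (Js m i V M)) (\<lambda>J. return_pmf (if F then flip V M i else swap V M i J)))) w
      = kk m i V M w" if M: "M \<in> {m, m+1}" for M
  proof -
    have p: "0 \<le> pF m i V M" "pF m i V M \<le> 1" by (auto simp: pF_def)
    note ne = Js_ne[OF V M m i]
    show ?thesis
      unfolding pmf_bind_bern[OF p] kk_def
      using ne by (simp add: pmf_bind_pmf_of_set pmf_return indicator_def of_bool_def eq_commute)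
  qed
  have mm: "m \<noteq> m+1" by simp
  show ?thesis unfolding KK_def
    by (subst pmf_bind_pmf_of_set) (auto simp: inner mm)
qed

lemma cond_unif:
  assumes "finite A" "A \<inter> s \<noteq> {}"
  shows "cond_pmf (pmf_of_set A) s = pmf_of_set (A \<inter> s)"
proof -
  have ne: "A \<noteq> {}" using assms by auto
  have ne': "set_pmf (pmf_of_set A) \<inter> s \<noteq> {}" using assms ne by simp
  show ?thesis
  proof (rule pmf_eqI)
    fix x
    have cA: "card A > 0" using assms ne by (simp add: card_gt_0_iff)
    have cAs: "card (A \<inter> s) > 0" using assms by (simp add: card_gt_0_iff)
    show "pmf (cond_pmf (pmf_of_set A) s) x = pmf (pmf_of_set (A \<inter> s)) x"
      unfolding pmf_cond[OF ne'] using assms ne cA cAs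
      by (auto simp: measure_pmf_of_set indicator_def)
  qed
qed

lemma claim1:
  assumes m: "m \<ge> 1" and i: "i \<in> {1..2*m+1}"
  shows "map_pmf (\<lambda>(V, M, F, J). Vi m V M F J i) (joint m i)
            = cond_pmf (V_pmf m) {V. bulb m V i = 1}"
proof -
  let ?AA = "AA m"
  let ?Ap = "{V \<in> AA m. bulb m V i = 1}"
  let ?Az = "{V \<in> AA m. bulb m V i \<noteq> 1}"
  have cA: "card ?AA = 2 * card ?Ap" by (rule card_Ai[OF m i])
  have finA: "finite ?AA" by (rule AA_fin)
  have neA: "?AA \<noteq> {}" by (rule AA_ne)
  have cApos: "card ?AA > 0" using finA neA by (simp add: card_gt_0_iff)
  hence cA1pos: "card ?Ap > 0" using cA by simp
  hence neA1: "?Ap \<noteq> {}" by (metis card.empty less_irrefl)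
  have rhs: "cond_pmf (V_pmf m) {V. bulb m V i = 1} = pmf_of_set ?Ap"
    unfolding V_pmf_unif[OF m] using finA neA1 by (subst cond_unif) (auto simp: Int_def)
  show ?thesis unfolding rhs lhs_alt[OF m]
  proof (rule pmf_eqI)
    fix w
    have "pmf (bind_pmf (pmf_of_set ?AA) (\<lambda>V. if bulb m V i = 1 then return_pmf V else KK m i V)) w
        = (\<Sum>V\<in>?AA. pmf (if bulb m V i = 1 then return_pmf V else KK m i V) w) / card ?AA"
      by (rule pmf_bind_pmf_of_set[OF neA finA])
    also have "(\<Sum>V\<in>?AA. pmf (if bulb m V i = 1 then return_pmf V else KK m i V) w)
        = (\<Sum>V\<in>?Ap. pmf (return_pmf V) w) + (\<Sum>V\<in>?Az. pmf (KK m i V) w)"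
    proof -
      have "(\<Sum>V\<in>?AA. pmf (if bulb m V i = 1 then return_pmf V else KK m i V) w)
          = (\<Sum>V\<in>?AA. if bulb m V i = 1 then pmf (return_pmf V) w else pmf (KK m i V) w)"
        by (intro sum.cong refl) auto
      also have "\<dots> = (\<Sum>V\<in>?AA \<inter> {V. bulb m V i = 1}. pmf (return_pmf V) w)
                   + (\<Sum>V\<in>?AA \<inter> - {V. bulb m V i = 1}. pmf (KK m i V) w)"
        by (rule sum.If_cases[OF finA])
      also have "?AA \<inter> {V. bulb m V i = 1} = ?Ap" by auto
      also have "?AA \<inter> - {V. bulb m V i = 1} = ?Az" by auto
      finally show ?thesis .
    qed
    also have "(\<Sum>V\<in>?Ap. pmf (return_pmf V) w) = of_bool (w \<in> ?Ap)"
    proof -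
      have "(\<Sum>V\<in>?Ap. pmf (return_pmf V) w) = (\<Sum>V\<in>?Ap. if V = w then 1 else 0)"
        by (intro sum.cong refl) (auto simp: pmf_return indicator_def)
      also have "\<dots> = of_bool (w \<in> ?Ap)" using finA by (simp add: sum.delta')
      finally show ?thesis .
    qed
    also have "(\<Sum>V\<in>?Az. pmf (KK m i V) w) = of_bool (w \<in> ?Ap)"
    proof -
      have "(\<Sum>V\<in>?Az. pmf (KK m i V) w) = ((\<Sum>V\<in>?Az. kk m i V m w) + (\<Sum>V\<in>?Az. kk m i V (m+1) w)) / 2"
        by (simp add: pmf_KK[OF m i] sum.distrib sum_divide_distrib[symmetric])
      also have "\<dots> = of_bool (w \<in> ?Ap)"
      proof (cases "w \<in> ?Ap")
        case True
        thus ?thesis using key_one[OF m i, of m w] key_one[OF m i, of "m+1" w] by simp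
      next
        case False
        have "(\<Sum>V\<in>?Az. kk m i V M w) = 0" if "M \<in> {m, m+1}" for M
          using False by (intro sum.neutral ballI key_zero[OF m i that]) auto
        thus ?thesis using False by simp
      qed
      finally show ?thesis .
    qed
    also have "(of_bool (w \<in> ?Ap) + of_bool (w \<in> ?Ap)) / real (card ?AA) = pmf (pmf_of_set ?Ap) w"
      using cA cA1pos finA neA1 by (auto simp: indicator_def)
    finally show "pmf (bind_pmf (pmf_of_set ?AA) (\<lambda>V. if bulb m V i = 1 then return_pmf V else KK m i V)) w
        = pmf (pmf_of_set ?Ap) w" .
  qed
qed


lemma full_alt: "full m = bind_pmf (pmf_of_set {1..2*m+1})
    (\<lambda>I. map_pmf (\<lambda>(V, M, F, J). (I, V, M, F, J)) (joint m I))"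
  unfolding full_def map_pmf_def
  by (intro bind_pmf_cong refl) (auto split: prod.splits)

lemma joint_alt: "joint m i = bind_pmf (V_pmf m) (\<lambda>V. bind_pmf (pmf_of_set {m, m+1}) (\<lambda>M.
     bind_pmf (bernoulli_pmf (pF m i V M)) (\<lambda>F. bind_pmf (pmf_of_set (Js m i V M))
       (\<lambda>J. return_pmf (V, M, F, J)))))"
  unfolding joint_def pF_def Js_def ..

lemma set_joint:
  assumes m: "m \<ge> 1" and i: "i \<in> {1..2*m+1}" and x: "x \<in> set_pmf (joint m i)"
  shows "\<exists>V M F J. x = (V, M, F, J) \<and> V \<in> AA m \<and> M \<in> {m, m+1} \<and> J \<in> Js m i V M"
proof -
  from x obtain V where V: "V \<in> AA m" and x1: "x \<in> set_pmf (bind_pmf (pmf_of_set {m, m+1}) (\<lambda>M.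
     bind_pmf (bernoulli_pmf (pF m i V M)) (\<lambda>F. bind_pmf (pmf_of_set (Js m i V M))
       (\<lambda>J. return_pmf (V, M, F, J)))))"
    unfolding joint_alt V_pmf_unif[OF m] set_bind_pmf using AA_fin AA_ne by auto
  from x1 obtain M where M: "M \<in> {m, m+1}" and x2: "x \<in> set_pmf (
     bind_pmf (bernoulli_pmf (pF m i V M)) (\<lambda>F. bind_pmf (pmf_of_set (Js m i V M))
       (\<lambda>J. return_pmf (V, M, F, J))))"
    unfolding set_bind_pmf by auto
  from x2 obtain F where x3: "x \<in> set_pmf (bind_pmf (pmf_of_set (Js m i V M)) (\<lambda>J. return_pmf (V, M, F, J)))"
    unfolding set_bind_pmf by auto
  from x3 obtain J where "J \<in> set_pmf (pmf_of_set (Js m i V M))" "x = (V, M, F, J)"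
    unfolding set_bind_pmf by auto
  moreover have "set_pmf (pmf_of_set (Js m i V M)) = Js m i V M"
    using Js_ne[OF V M m i] by simp
  ultimately show ?thesis using V M by auto
qed

lemma claim3:
  assumes m: "m \<ge> 1"
  shows "AE x in measure_pmf (full m). (case x of (I, V, M, F, J) \<Rightarrow>
            int (Vtot m (Vi m V M F J I)) - int (Vtot m V)
              = of_bool (bulb m V I = 0 \<and> F)
                + 2 * of_bool (bulb m V I = 0 \<and> bulb m V J = 0 \<and> \<not> F)
            \<and> Vtot m V \<le> Vtot m (Vi m V M F J I)
            \<and> Vtot m (Vi m V M F J I) \<le> Vtot m V + 2)"
proof (rule AE_pmfI)
  fix x assume x: "x \<in> set_pmf (full m)"
  then obtain I y where I: "I \<in> {1..2*m+1}" and y: "y \<in> set_pmf (joint m I)"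
    and xy: "x = (case y of (V, M, F, J) \<Rightarrow> (I, V, M, F, J))"
    unfolding full_alt set_bind_pmf set_map_pmf by auto
  obtain V M F J where yy: "y = (V, M, F, J)" and V: "V \<in> AA m" and M: "M \<in> {m, m+1}"
      and J: "J \<in> Js m I V M"
    using set_joint[OF m I y] by blast
  have xx: "x = (I, V, M, F, J)" using xy yy by simp
  have Mr: "M \<in> {1..2*m+1}" using M m by auto
  have Jr: "J \<in> {1..2*m+1}" and d: "V M I \<noteq> V M J" using J by (auto simp: Js_def)
  have eq: "int (Vtot m (Vi m V M F J I)) - int (Vtot m V)
              = of_bool (bulb m V I = 0 \<and> F)
                + 2 * of_bool (bulb m V I = 0 \<and> bulb m V J = 0 \<and> \<not> F)"
  proof (cases "bulb m V I = 1")
    case True thus ?thesis by (simp add: Vi_def)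
  next
    case False
    hence b0: "bulb m V I = 0" using bulb_01[of m V I] by auto
    show ?thesis
    proof (cases F)
      case True
      thus ?thesis using Vtot_flip[OF V Mr I] b0 by (simp add: Vi_def)
    next
      case False
      thus ?thesis using Vtot_swap[OF V Mr I Jr d] b0 bulb_01[of m V J] by (auto simp: Vi_def)
    qed
  qed
  have "Vtot m V \<le> Vtot m (Vi m V M F J I) \<and> Vtot m (Vi m V M F J I) \<le> Vtot m V + 2"
    using eq by (auto simp: of_bool_def split: if_splits)
  thus "case x of (I, V, M, F, J) \<Rightarrow>
            int (Vtot m (Vi m V M F J I)) - int (Vtot m V)
              = of_bool (bulb m V I = 0 \<and> F)
                + 2 * of_bool (bulb m V I = 0 \<and> bulb m V J = 0 \<and> \<not> F)
            \<and> Vtot m V \<le> Vtot m (Vi m V M F J I)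
            \<and> Vtot m (Vi m V M F J I) \<le> Vtot m V + 2"
    using eq xx by simp
qed


lemma cond_A1:
  assumes m: "m \<ge> 1" and i: "i \<in> {1..2*m+1}"
  shows "cond_pmf (V_pmf m) {V. bulb m V i = 1} = pmf_of_set {V \<in> AA m. bulb m V i = 1}"
proof -
  have "card (AA m) > 0" using AA_fin AA_ne by (simp add: card_gt_0_iff)
  hence "card {V \<in> AA m. bulb m V i = 1} > 0" using card_Ai[OF m i] by simp
  hence ne: "{V \<in> AA m. bulb m V i = 1} \<noteq> {}" by (metis card.empty less_irrefl)
  show ?thesis unfolding V_pmf_unif[OF m] using AA_fin ne
    by (subst cond_unif) (auto simp: Int_def)
qed

lemma mapV:
  assumes m: "m \<ge> 1"
  shows "map_pmf (\<lambda>(I, V, M, F, J). V) (full m) = pmf_of_set (AA m)"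
proof -
  have "map_pmf (\<lambda>(V, M, F, J). V) (joint m I) = V_pmf m" for I
    unfolding joint_alt by (simp add: map_bind_pmf bind_return_pmf')
  hence "map_pmf (\<lambda>(I, V, M, F, J). V) (full m) = bind_pmf (pmf_of_set {1..2*m+1}) (\<lambda>I. V_pmf m)"
    unfolding full_alt map_bind_pmf pmf.map_comp by (simp add: o_def case_prod_unfold)
  thus ?thesis using V_pmf_unif[OF m] by simp
qed

definition DD :: "nat \<Rightarrow> arr pmf" where
  "DD m = bind_pmf (pmf_of_set {1..2*m+1}) (\<lambda>I. pmf_of_set {V \<in> AA m. bulb m V I = 1})"

lemma mapVi:
  assumes m: "m \<ge> 1"
  shows "map_pmf (\<lambda>(I, V, M, F, J). Vi m V M F J I) (full m) = DD m"
proof -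
  have "map_pmf (\<lambda>(I, V, M, F, J). Vi m V M F J I) (full m)
      = bind_pmf (pmf_of_set {1..2*m+1}) (\<lambda>I. map_pmf (\<lambda>(V, M, F, J). Vi m V M F J I) (joint m I))"
    unfolding full_alt map_bind_pmf pmf.map_comp by (simp add: o_def case_prod_unfold)
  also have "\<dots> = DD m"
    unfolding DD_def
  proof (intro bind_pmf_cong refl)
    fix I assume "I \<in> set_pmf (pmf_of_set {1..2*m+1})"
    hence I: "I \<in> {1..2*m+1}" by simp
    show "map_pmf (\<lambda>(V, M, F, J). Vi m V M F J I) (joint m I) = pmf_of_set {V \<in> AA m. bulb m V I = 1}"
      by (simp only: claim1[OF m I] cond_A1[OF m I])
  qed
  finally show ?thesis .
qed

lemma sum_bulb:
  "real (Vtot m w) = (\<Sum>I\<in>{1..2*m+1}. of_bool (bulb m w I = 1))"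
proof -
  have "real (Vtot m w) = (\<Sum>I\<in>{1..2*m+1}. real (bulb m w I))" by (simp add: Vtot_def)
  also have "\<dots> = (\<Sum>I\<in>{1..2*m+1}. of_bool (bulb m w I = 1))"
    by (intro sum.cong refl) (use bulb_01[of m w] in auto)
  finally show ?thesis .
qed

lemma pmf_DD:
  assumes m: "m \<ge> 1" and w: "w \<in> AA m"
  shows "pmf (DD m) w = real (Vtot m w) * 2 / (real (card (AA m)) * real (2*m+1))"
proof -
  have ne: "{1..2*m+1} \<noteq> {}" by simp
  have cI: "real (card {V \<in> AA m. bulb m V I = 1}) = real (card (AA m)) / 2" if "I \<in> {1..2*m+1}" for I
    using card_Ai[OF m that] by simp
  have "pmf (DD m) w = (\<Sum>I\<in>{1..2*m+1}. pmf (pmf_of_set {V \<in> AA m. bulb m V I = 1}) w) / real (2*m+1)"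
    unfolding DD_def by (subst pmf_bind_pmf_of_set) simp_all
  also have "(\<Sum>I\<in>{1..2*m+1}. pmf (pmf_of_set {V \<in> AA m. bulb m V I = 1}) w)
     = (\<Sum>I\<in>{1..2*m+1}. of_bool (bulb m w I = 1) * 2 / real (card (AA m)))"
  proof (intro sum.cong refl)
    fix I assume I: "I \<in> {1..2*m+1}"
    have "card (AA m) > 0" using AA_fin AA_ne by (simp add: card_gt_0_iff)
    hence "card {V \<in> AA m. bulb m V I = 1} > 0" using card_Ai[OF m I] by simp
    hence ne1: "{V \<in> AA m. bulb m V I = 1} \<noteq> {}" by (metis card.empty less_irrefl)
    have "pmf (pmf_of_set {V \<in> AA m. bulb m V I = 1}) w
        = indicator {V \<in> AA m. bulb m V I = 1} w / real (card {V \<in> AA m. bulb m V I = 1})"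
      using ne1 AA_fin by simp
    also have "\<dots> = indicator {V \<in> AA m. bulb m V I = 1} w / (real (card (AA m)) / 2)"
      by (simp only: cI[OF I])
    finally show "pmf (pmf_of_set {V \<in> AA m. bulb m V I = 1}) w = of_bool (bulb m w I = 1) * 2 / real (card (AA m))"
      using w by (simp add: indicator_def)
  qed
  also have "\<dots> = real (Vtot m w) * 2 / real (card (AA m))"
    by (simp add: sum_bulb sum_divide_distrib[symmetric] sum_distrib_right[symmetric])
  finally show ?thesis by simp
qed

lemma set_DD: "m \<ge> 1 \<Longrightarrow> set_pmf (DD m) \<subseteq> AA m"
proof
  fix w assume m: "m \<ge> 1" and "w \<in> set_pmf (DD m)"
  then obtain I where I: "I \<in> {1..2*m+1}" and w: "w \<in> set_pmf (pmf_of_set {V \<in> AA m. bulb m V I = 1})"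
    unfolding DD_def set_bind_pmf by auto
  have "card (AA m) > 0" using AA_fin AA_ne by (simp add: card_gt_0_iff)
  hence "card {V \<in> AA m. bulb m V I = 1} > 0" using card_Ai[OF m I] by simp
  hence ne1: "{V \<in> AA m. bulb m V I = 1} \<noteq> {}" by (metis card.empty less_irrefl)
  show "w \<in> AA m" using w ne1 AA_fin by simp
qed

lemma sum_Vtot:
  assumes m: "m \<ge> 1"
  shows "(\<Sum>V\<in>AA m. real (Vtot m V)) = real (2*m+1) * real (card (AA m)) / 2"
proof -
  have "(\<Sum>V\<in>AA m. real (Vtot m V)) = (\<Sum>I\<in>{1..2*m+1}. \<Sum>V\<in>AA m. of_bool (bulb m V I = 1))"
    by (simp add: sum_bulb sum.swap[of _ "AA m"] del: sum_of_bool_eq)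
  also have "\<dots> = (\<Sum>I\<in>{1..2*m+1}. real (card (AA m)) / 2)"
  proof (intro sum.cong refl)
    fix I assume I: "I \<in> {1..2*m+1}"
    have "(\<Sum>V\<in>AA m. of_bool (bulb m V I = 1) :: real) = real (card {V \<in> AA m. bulb m V I = 1})"
      using AA_fin by (simp add: Int_def)
    thus "(\<Sum>V\<in>AA m. of_bool (bulb m V I = 1) :: real) = real (card (AA m)) / 2"
      using card_Ai[OF m I] by simp
  qed
  finally show ?thesis by simp
qed

lemma claim2:
  assumes m: "m \<ge> 1"
  shows "measure_pmf.expectation (full m)
              (\<lambda>(I, V, M, F, J). real (Vtot m V) * g (real (Vtot m V)))
            = measure_pmf.expectation (full m) (\<lambda>(I, V, M, F, J). real (Vtot m V))
              * measure_pmf.expectation (full m)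
                  (\<lambda>(I, V, M, F, J). g (real (Vtot m (Vi m V M F J I))))"
proof -
  let ?N = "real (card (AA m))"
  let ?n = "real (2*m+1)"
  have Npos: "?N > 0" using AA_fin AA_ne by (simp add: card_gt_0_iff)
  have E1: "measure_pmf.expectation (full m) (\<lambda>(I, V, M, F, J). h V) = (\<Sum>V\<in>AA m. h V) / ?N"
    for h :: "arr \<Rightarrow> real"
  proof -
    have "measure_pmf.expectation (full m) (\<lambda>(I, V, M, F, J). h V)
        = measure_pmf.expectation (map_pmf (\<lambda>(I, V, M, F, J). V) (full m)) h"
      by (simp add: case_prod_unfold)
    also have "\<dots> = (\<Sum>V\<in>AA m. h V) / ?N"
      unfolding mapV[OF m] using AA_fin AA_ne by (simp add: integral_pmf_of_set)
    finally show ?thesis .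
  qed
  have E2: "measure_pmf.expectation (full m) (\<lambda>(I, V, M, F, J). h (Vi m V M F J I))
      = (\<Sum>w\<in>AA m. pmf (DD m) w * h w)" for h :: "arr \<Rightarrow> real"
  proof -
    have "measure_pmf.expectation (full m) (\<lambda>(I, V, M, F, J). h (Vi m V M F J I))
        = measure_pmf.expectation (map_pmf (\<lambda>(I, V, M, F, J). Vi m V M F J I) (full m)) h"
      by (simp add: case_prod_unfold)
    also have "\<dots> = (\<Sum>w\<in>AA m. pmf (DD m) w *\<^sub>R h w)"
      unfolding mapVi[OF m] by (rule integral_measure_pmf[OF AA_fin]) (use set_DD[OF m] in auto)
    finally show ?thesis by simp
  qed
  have e1: "measure_pmf.expectation (full m) (\<lambda>(I, V, M, F, J). real (Vtot m V) * g (real (Vtot m V)))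
      = (\<Sum>V\<in>AA m. real (Vtot m V) * g (real (Vtot m V))) / ?N"
    by (rule E1)
  have e2: "measure_pmf.expectation (full m) (\<lambda>(I, V, M, F, J). real (Vtot m V)) = ?n / 2"
    unfolding E1 sum_Vtot[OF m] using Npos by simp
  have e3: "measure_pmf.expectation (full m) (\<lambda>(I, V, M, F, J). g (real (Vtot m (Vi m V M F J I))))
      = (\<Sum>w\<in>AA m. real (Vtot m w) * g (real (Vtot m w))) * 2 / (?N * ?n)"
  proof -
    have "measure_pmf.expectation (full m) (\<lambda>(I, V, M, F, J). g (real (Vtot m (Vi m V M F J I))))
        = (\<Sum>w\<in>AA m. pmf (DD m) w * g (real (Vtot m w)))"
      by (rule E2)
    also have "\<dots> = (\<Sum>w\<in>AA m. real (Vtot m w) * g (real (Vtot m w)) * 2 / (?N * ?n))"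
      by (intro sum.cong refl) (simp add: pmf_DD[OF m])
    also have "\<dots> = (\<Sum>w\<in>AA m. real (Vtot m w) * g (real (Vtot m w))) * 2 / (?N * ?n)"
      by (simp add: sum_divide_distrib[symmetric] sum_distrib_right[symmetric])
    finally show ?thesis .
  qed
  have "?n > 0" by simp
  have aux: "\<And>(n::real) N X. n \<noteq> 0 \<Longrightarrow> N \<noteq> 0 \<Longrightarrow> X / N = n / 2 * (X * 2 / (N * n))"
    by (simp add: field_simps)
  show ?thesis unfolding e1 e2 e3
    by (rule aux) (use Npos \<open>?n > 0\<close> in auto)
qed


theorem theorem3p2:
  fixes m :: nat
  assumes "m \<ge> 1"
  shows "(\<forall>i\<in>{1..2*m+1}.
            map_pmf (\<lambda>(V, M, F, J). Vi m V M F J i) (joint m i)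
              = cond_pmf (V_pmf m) {V. bulb m V i = 1})
       \<and> (\<forall>g :: real \<Rightarrow> real. bounded (range g) \<and> continuous_on UNIV g \<longrightarrow>
            measure_pmf.expectation (full m)
              (\<lambda>(I, V, M, F, J). real (Vtot m V) * g (real (Vtot m V)))
            = measure_pmf.expectation (full m) (\<lambda>(I, V, M, F, J). real (Vtot m V))
              * measure_pmf.expectation (full m)
                  (\<lambda>(I, V, M, F, J). g (real (Vtot m (Vi m V M F J I)))))
       \<and> (AE x in measure_pmf (full m). (case x of (I, V, M, F, J) \<Rightarrow>
            int (Vtot m (Vi m V M F J I)) - int (Vtot m V)
              = of_bool (bulb m V I = 0 \<and> F)
                + 2 * of_bool (bulb m V I = 0 \<and> bulb m V J = 0 \<and> \<not> F)
            \<and> Vtot m V \<le> Vtot m (Vi m V M F J I)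
            \<and> Vtot m (Vi m V M F J I) \<le> Vtot m V + 2))"
  proof (intro conjI ballI allI impI)
  fix i assume "i \<in> {1..2*m+1}"
  thus "map_pmf (\<lambda>(V, M, F, J). Vi m V M F J i) (joint m i) = cond_pmf (V_pmf m) {V. bulb m V i = 1}"
    by (rule claim1[OF assms])
next
  fix g :: "real \<Rightarrow> real"
  show "measure_pmf.expectation (full m)
              (\<lambda>(I, V, M, F, J). real (Vtot m V) * g (real (Vtot m V)))
            = measure_pmf.expectation (full m) (\<lambda>(I, V, M, F, J). real (Vtot m V))
              * measure_pmf.expectation (full m)
                  (\<lambda>(I, V, M, F, J). g (real (Vtot m (Vi m V M F J I))))"
    by (rule claim2[OF assms])
next
  show "AE x in measure_pmf (full m). (case x of (I, V, M, F, J) \<Rightarrow>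
            int (Vtot m (Vi m V M F J I)) - int (Vtot m V)
              = of_bool (bulb m V I = 0 \<and> F)
                + 2 * of_bool (bulb m V I = 0 \<and> bulb m V J = 0 \<and> \<not> F)
            \<and> Vtot m V \<le> Vtot m (Vi m V M F J I)
            \<and> Vtot m (Vi m V M F J I) \<le> Vtot m V + 2)"
    by (rule claim3[OF assms])
qed

end
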